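(* Let $Q$ be a nonzero quadratic form on $\mathbb{F}_{q_1}/\mathbb{F}_q$ with rank $r_Q\ge 1$, and let \[\mathcal{C}_Q=\{(aQ(x)+\mathrm{Tr}_{q_2/q}(by))_{(x,y)\in\mathbb{F}^\star} : (a,b)\in\mathbb{F}_q\times\mathbb{F}_{q_2}\}.\] (1) If $r_Q$ is even, then $\mathcal{C}_Q$ is a $[q^M-1,\,m_2+1]_q$ linear code whose weight distribution is: weight $0$ with frequency $1$; weight $q^{M-1}(q-1)$ with frequency $q(q^{m_2}-1)$; weight $q^{M-1}(q-1)(1-\epsilon q^{-r_Q/2})$ with frequency $q-1$. Its complete weight enumerator is \[\omega_0^{q^M-1}+q(q^{m_2}-1)\,\omega_0^{q^{M-1}-1}\prod_{\rho=1}^{q-1}\omega_\rho^{q^{M-1}}+(q-1)\,\omega_0^{q^{M-1}(1+\epsilon q^{-r_Q/2}(q-1))-1}\prod_{\rho=1}^{q-1}\omega_\rho^{q^{M-1}(1-\epsilon q^{-r_Q/2})}.\] (2) If $r_Q$ is odd, then $\mathcal{C}_Q$ is a $[q^M-1,\,m_2+1]_q$ linear code whose weight distribution is: weight $0$ with frequency $1$; weight $q^{M-1}(q-1)$ with frequency $q^{m_2+1}-1$. Its complete weight enumerator is \[\omega_0^{q^M-1}+q(q^{m_2}-1)\,\omega_0^{q^{M-1}-1}\prod_{\rho=1}^{q-1}\omega_\rho^{q^{M-1}}+\frac{q-1}{2}\,\omega_0^{q^{M-1}-1}\prod_{\rho=1}^{q-1}\omega_\rho^{q^{M-1}(1+\epsilon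 q^{\frac{1-r_Q}{2}}\eta(-\omega_\rho))}+\frac{q-1}{2}\,\omega_0^{q^{M-1}-1}\prod_{\rho=1}^{q-1}\omega_\rho^{q^{M-1}(1-\epsilon q^{\frac{1-r_Q}{2}}\eta(-\omega_\rho))}.\] Moreover, in this case $\mathcal{C}_Q$ meets the Griesmer bound (with equality) if and only if $m_1=r_Q=1$.
   Context: Let $p$ be an odd prime, $m\ge1$, $q=p^m$. Let $m_1,m_2$ be positive integers, $M=m_1+m_2$, $q_i=q^{m_i}$ ($i=1,2$), $\mathbb{F}=\mathbb{F}_{q_1}\times\mathbb{F}_{q_2}$, $\mathbb{F}^\star=\mathbb{F}\setminus\{(0,0)\}$; coordinates of codewords are indexed by $\mathbb{F}^\star$ in a fixed order. $\mathrm{Tr}_{q^s/q}$ denotes the trace from $\mathbb{F}_{q^s}$ to $\mathbb{F}_q$. $\eta$ is the quadratic character of $\mathbb{F}_q$ with $\eta(0)=0$. A quadratic form $Q$ on $\mathbb{F}_{q_1}/\mathbb{F}_q$ is a map $Q:\mathbb{F}_{q_1}\to\mathbb{F}_q$ with $Q(ax)=a^2Q(x)$ for $a\in\mathbb{F}_q$ such that $B_Q(x,y)=\frac12(Q(x+y)-Q(x)-Q(y))$ is $\mathbb{F}_q$-bilinear. Its rank is $r_Q=m_1-\dim_{\mathbb{F}_q}\{x: B_Q(x,y)=0\ \forall y\}$. In suitable $\mathbb{F}_q$-coordinates $Q=\lambda_1x_1^2+\dots+\lambda_{r_Q}x_{r_Q}^2$ with $\lambda_i\in\mathbb{F}_q^*$;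 set $\Delta_Q=\lambda_1\cdots\lambda_{r_Q}$ and $\varepsilon_Q=\eta(\Delta_Q)$. Define $\epsilon=\varepsilon_Q(-1)^{(p-1)mr_Q/4}$ if $r_Q$ is even and $\epsilon=\varepsilon_Q(-1)^{(p-1)m(r_Q+1)/4}$ if $r_Q$ is odd. Complete weight enumerator: list $\mathbb{F}_q=\{\omega_0=0,\omega_1,\dots,\omega_{q-1}\}$; for $c\in\mathbb{F}_q^n$ let $\omega[c]=\prod_j\omega_j^{k_j}$ (formal monomial) where $k_j$ is the number of coordinates of $c$ equal to $\omega_j$; the complete weight enumerator of a code $\mathcal{C}$ is $\sum_{c\in\mathcal{C}}\omega[c]$. The Griesmer bound for an $[n,k,d]_q$ code is $n\ge\sum_{i=0}^{k-1}\lceil d/q^i\rceil$; meeting it means equality. *)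

theory Defs
  imports Complex_Main "HOL-Computational_Algebra.Primes"
begin

definition eta :: "'a::field \<Rightarrow> int" where
  "eta x = (if x = 0 then 0 else if (\<exists>y. y * y = x) then 1 else -1)"

text \<open>e is an embedding of the field F_q into the extension field (making it an F_q-extension).\<close>
definition is_emb :: "('a::field \<Rightarrow> 'b::field) \<Rightarrow> bool" where
  "is_emb e \<longleftrightarrow> inj e \<and> (\<forall>x y. e (x + y) = e x + e y) \<and> (\<forall>x y. e (x * y) = e x * e y) \<and> e 1 = 1"

text \<open>Trace Tr_{q^s/q}(y) = sum_{j<s} y^(q^j), pulled back to F_q along the embedding e.\<close>
definition trace :: "('a::{finite,field} \<Rightarrow> 'b::field) \<Rightarrow> nat \<Rightarrow> 'b \<Rightarrow> 'a" where
  "trace e s y = (THE a. e a = (\<Sum>j<s. y ^ (card (UNIV :: 'a set) ^ j)))"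

definition polar :: "('b::plus \<Rightarrow> 'a::field) \<Rightarrow> 'b \<Rightarrow> 'b \<Rightarrow> 'a" where
  "polar Q x y = (Q (x + y) - Q x - Q y) / 2"

definition is_qform :: "('a::field \<Rightarrow> 'b::field) \<Rightarrow> ('b \<Rightarrow> 'a) \<Rightarrow> bool" where
  "is_qform e Q \<longleftrightarrow>
     (\<forall>a x. Q (e a * x) = a ^ 2 * Q x) \<and>
     (\<forall>x x' y. polar Q (x + x') y = polar Q x y + polar Q x' y) \<and>
     (\<forall>x y y'. polar Q x (y + y') = polar Q x y + polar Q x y') \<and>
     (\<forall>a x y. polar Q (e a * x) y = a * polar Q x y) \<and>
     (\<forall>a x y. polar Q x (e a * y) = a * polar Q x y)"

definition qf_radical :: "('b::plus \<Rightarrow> 'a::field) \<Rightarrow> 'b set" where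
  "qf_radical Q = {x. \<forall>y. polar Q x y = 0}"

text \<open>Rank r_Q = m1 - dim_{F_q} radical; the dimension d of the F_q-subspace is
  characterised by its cardinality q^d.\<close>
definition qf_rank :: "nat \<Rightarrow> ('b::plus \<Rightarrow> 'a::{finite,field}) \<Rightarrow> nat" where
  "qf_rank m1 Q = m1 - (THE d. card (qf_radical Q) = card (UNIV :: 'a set) ^ d)"

definition is_basis :: "('a::field \<Rightarrow> 'b::field) \<Rightarrow> nat \<Rightarrow> (nat \<Rightarrow> 'b) \<Rightarrow> bool" where
  "is_basis e n \<beta> \<longleftrightarrow> bij_betw (\<lambda>c. \<Sum>i<n. e (c i) * \<beta> i) {c. \<forall>i\<ge>n. c i = 0} UNIV"

definition diag_form :: "('a::field \<Rightarrow> 'b::field) \<Rightarrow> nat \<Rightarrow> ('b \<Rightarrow> 'a) \<Rightarrow> nat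
    \<Rightarrow> (nat \<Rightarrow> 'b) \<Rightarrow> (nat \<Rightarrow> 'a) \<Rightarrow> bool" where
  "diag_form e n Q r \<beta> lam \<longleftrightarrow> is_basis e n \<beta> \<and> (\<forall>i<r. lam i \<noteq> 0) \<and>
     (\<forall>c. Q (\<Sum>i<n. e (c i) * \<beta> i) = (\<Sum>i<r. lam i * (c i) ^ 2))"

definition qf_Delta :: "('a::{finite,field} \<Rightarrow> 'b::field) \<Rightarrow> nat \<Rightarrow> ('b \<Rightarrow> 'a) \<Rightarrow> 'a" where
  "qf_Delta e n Q = (let r = qf_rank n Q;
       lam = snd (SOME (\<beta>, lam). diag_form e n Q r \<beta> lam) in \<Prod>i<r. lam i)"

definition qf_varepsilon :: "('a::{finite,field} \<Rightarrow> 'b::field) \<Rightarrow> nat \<Rightarrow> ('b \<Rightarrow> 'a) \<Rightarrow> int" where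
  "qf_varepsilon e n Q = eta (qf_Delta e n Q)"

definition qf_eps :: "nat \<Rightarrow> nat \<Rightarrow> ('a::{finite,field} \<Rightarrow> 'b::field) \<Rightarrow> nat \<Rightarrow> ('b \<Rightarrow> 'a) \<Rightarrow> int" where
  "qf_eps p m e n Q = (let r = qf_rank n Q in
     qf_varepsilon e n Q * (-1) ^ (if even r then (p - 1) * m * r div 4 else (p - 1) * m * (r + 1) div 4))"

text \<open>Coordinates of codewords: F* = F_{q1} x F_{q2} minus (0,0). Codewords are functions on F*
  (set to 0 outside F*).\<close>
definition Fstar :: "('b::zero \<times> 'c::zero) set" where
  "Fstar = UNIV - {(0, 0)}"

definition codeword :: "('a::{finite,field} \<Rightarrow> 'c::field) \<Rightarrow> nat \<Rightarrow> ('b::zero \<Rightarrow> 'a) \<Rightarrow> 'a \<Rightarrow> 'c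
    \<Rightarrow> ('b \<times> 'c \<Rightarrow> 'a)" where
  "codeword e2 m2 Q a b = (\<lambda>z. if z \<in> Fstar then a * Q (fst z) + trace e2 m2 (b * snd z) else 0)"

definition code_CQ :: "('a::{finite,field} \<Rightarrow> 'c::field) \<Rightarrow> nat \<Rightarrow> ('b::zero \<Rightarrow> 'a)
    \<Rightarrow> ('b \<times> 'c \<Rightarrow> 'a) set" where
  "code_CQ e2 m2 Q = {codeword e2 m2 Q a b | a b. True}"

definition hwt :: "('b::zero \<times> 'c::zero \<Rightarrow> 'a::zero) \<Rightarrow> nat" where
  "hwt c = card {z \<in> Fstar. c z \<noteq> 0}"

definition hdist :: "('b::zero \<times> 'c::zero \<Rightarrow> 'a) \<Rightarrow> ('b \<times> 'c \<Rightarrow> 'a) \<Rightarrow> nat" where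
  "hdist c c' = card {z \<in> Fstar. c z \<noteq> c' z}"

definition min_dist :: "('b::zero \<times> 'c::zero \<Rightarrow> 'a) set \<Rightarrow> nat" where
  "min_dist C = Min {hdist c c' | c c'. c \<in> C \<and> c' \<in> C \<and> c \<noteq> c'}"

text \<open>Exponent vector of the monomial omega[c]: k(w) = number of coordinates equal to w.\<close>
definition comp_vec :: "('b::zero \<times> 'c::zero \<Rightarrow> 'a) \<Rightarrow> 'a \<Rightarrow> nat" where
  "comp_vec c = (\<lambda>w. card {z \<in> Fstar. c z = w})"

definition is_linear_code :: "('b \<times> 'c \<Rightarrow> 'a::field) set \<Rightarrow> bool" where
  "is_linear_code C \<longleftrightarrow> (\<lambda>_. 0) \<in> C \<and> (\<forall>c\<in>C. \<forall>c'\<in>C. (\<lambda>z. c z + c' z) \<in> C) \<and>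
     (\<forall>a. \<forall>c\<in>C. (\<lambda>z. a * c z) \<in> C)"

definition meets_griesmer :: "nat \<Rightarrow> nat \<Rightarrow> nat \<Rightarrow> nat \<Rightarrow> bool" where
  "meets_griesmer q n k d \<longleftrightarrow> int n = (\<Sum>i<k. \<lceil>real d / real q ^ i\<rceil>)"

end

theory Submission
  imports Defs "HOL-Computational_Algebra.Polynomial"
begin

section \<open>Finite field basics\<close>

lemma ff_pow_card:
  fixes x :: "'a::{finite,field}"
  shows "x ^ card (UNIV :: 'a set) = x"
proof (cases "x = 0")
  case False
  have "x * (\<Prod>y\<in>UNIV-{0}. x * y) = x * x ^ (card (UNIV :: 'a set) - 1) * \<Prod>(UNIV-{0})"
    by (simp add: prod.distrib mult_ac)
  also have "x * x ^ (card (UNIV :: 'a set) - 1) = x ^ Suc (card (UNIV :: 'a set) - 1)"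
    by (subst power_Suc) auto
  also have "Suc (card (UNIV :: 'a set) - 1) = card (UNIV :: 'a set)"
    using finite_UNIV_card_ge_0[where ?'a = 'a] by simp
  also have "(\<Prod>y\<in>UNIV-{0}. x * y) = (\<Prod>y\<in>UNIV-{0}. y)"
    by (rule prod.reindex_bij_witness[of _ "\<lambda>y. y / x" "\<lambda>y. x * y"]) (use False in auto)
  finally show ?thesis
    by simp
qed (use finite_UNIV_card_ge_0[where ?'a = 'a] in auto)

lemma ff_pow_card_pow:
  fixes x :: "'a::{finite,field}"
  shows "x ^ (card (UNIV :: 'a set) ^ n) = x"
  by (induction n) (simp_all add: ff_pow_card power_mult)

lemma ff_of_nat_card: "of_nat (card (UNIV :: 'a set)) = (0::'a::{finite,field})"
proof -
  have "(\<Sum>x\<in>(UNIV::'a set). x + 1) = (\<Sum>x\<in>UNIV. x)"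
    by (rule sum.reindex_bij_witness[of _ "\<lambda>y. y - 1" "\<lambda>y. y + 1"]) auto
  then show ?thesis by (simp add: sum.distrib)
qed

lemma ff_prime_CHAR: "prime CHAR('a::{finite,field})"
  by (rule prime_CHAR_semidom) (rule finite_imp_CHAR_pos, simp)

lemma ff_CHAR:
  assumes "card (UNIV :: 'a::{finite,field} set) = p ^ m" "prime p"
  shows "CHAR('a) = p"
proof -
  have "CHAR('a) dvd p ^ m"
    using ff_of_nat_card[where 'a='a] assms(1) by (metis of_nat_eq_0_iff_char_dvd)
  then have "CHAR('a) dvd p" using ff_prime_CHAR[where 'a='a] prime_dvd_power by blast
  then show ?thesis using ff_prime_CHAR[where 'a='a] assms(2)
    by (simp add: primes_dvd_imp_eq)
qed

lemma ff_two_ne0: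
  assumes "odd (card (UNIV :: 'a::{finite,field} set))"
  shows "(2::'a) \<noteq> 0"
proof
  assume h: "(2::'a) = 0"
  obtain k where k: "card (UNIV::'a set) = 2 * k + 1" using assms oddE by blast
  have "(0::'a) = of_nat (2*k+1)" using ff_of_nat_card[where 'a='a] k by simp
  also have "\<dots> = 2 * of_nat k + 1" by simp
  also have "\<dots> = 1" using h by simp
  finally show False by simp
qed

section \<open>Quadratic character\<close>

lemma eta_cases: "eta x = 0 \<or> eta x = 1 \<or> eta x = -1"
  by (auto simp: eta_def)

lemma eta_0 [simp]: "eta 0 = 0" by (simp add: eta_def)

lemma sq_fiber:
  assumes "odd (card (UNIV :: 'a::{finite,field} set))"
  shows "int (card {x::'a. x * x = u}) = 1 + eta u"
proof -
  have two: "(2::'a) \<noteq> 0" using ff_two_ne0 assms by blast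
  show ?thesis
  proof (cases "u = 0")
    case True
    then have "{x::'a. x * x = u} = {0}" by auto
    then show ?thesis using True by simp
  next
    case False
    show ?thesis
    proof (cases "\<exists>y. y * y = u")
      case True
      then obtain t where t: "t * t = u" by blast
      then have t0: "t \<noteq> 0" using False by auto
      have key: "x * x = u \<longleftrightarrow> x = t \<or> x = -t" for x
      proof -
        have "x * x = u \<longleftrightarrow> (x - t) * (x + t) = 0" using t by (simp add: algebra_simps)
        also have "\<dots> \<longleftrightarrow> x = t \<or> x = -t" by (simp add: eq_neg_iff_add_eq_0)
        finally show ?thesis .
      qed
      have "{x::'a. x * x = u} = {t, -t}" using key by auto
      moreover have "t \<noteq> -t"
      proof
        assume "t = -t" then have "2 * t = 0" by simp
        then show False using two t0 by simp
      qed
      ultimately show ?thesis using True False by (simp add: eta_def)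
    next
      case nf: False
      then have "{x::'a. x * x = u} = {}" by auto
      then show ?thesis using nf False by (simp add: eta_def)
    qed
  qed
qed

lemma sum_eta_fiber:
  assumes "odd (card (UNIV :: 'a::{finite,field} set))"
  shows "(\<Sum>x\<in>(UNIV::'a set). f (x * x)) = (\<Sum>u\<in>UNIV. (1 + eta u) * f u)"
proof -
  have "(\<Sum>x\<in>(UNIV::'a set). f (x * x)) = (\<Sum>u\<in>UNIV. \<Sum>x\<in>{x. x \<in> UNIV \<and> x * x = u}. f (x * x))"
    by (rule sum.group[symmetric]) auto
  also have "\<dots> = (\<Sum>u\<in>UNIV. of_nat (card {x::'a. x * x = u}) * f u)"
    by (intro sum.cong refl) simp
  also have "\<dots> = (\<Sum>u\<in>UNIV. (1 + eta u) * f u)"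
    using sq_fiber[OF assms] by (metis of_int_of_nat_eq)
  finally show ?thesis .
qed

lemma sum_eta:
  assumes "odd (card (UNIV :: 'a::{finite,field} set))"
  shows "(\<Sum>u\<in>(UNIV::'a set). eta u) = 0"
proof -
  have "(\<Sum>x\<in>(UNIV::'a set). (\<lambda>_. 1::int) (x * x)) = (\<Sum>u\<in>(UNIV::'a set). (1 + eta u) * (\<lambda>_. 1) u)"
    using sum_eta_fiber[OF assms, of "\<lambda>_. 1::int"] by simp
  then show ?thesis by (simp add: sum.distrib)
qed

lemma card_ge_3:
  assumes "odd (card (UNIV :: 'a::{finite,field} set))"
  shows "card (UNIV :: 'a set) \<ge> 3"
proof -
  have "{0, 1::'a} \<subseteq> UNIV" by simp
  then have "card {0, 1::'a} \<le> card (UNIV::'a set)" by (rule card_mono[OF finite_UNIV])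
  then have "2 \<le> card (UNIV::'a set)" by simp
  with assms show ?thesis by presburger
qed

definition sqset :: "'a::field set" where "sqset = {u. u \<noteq> 0 \<and> (\<exists>y. y * y = u)}"
definition nsqset :: "'a::field set" where "nsqset = {u. u \<noteq> 0 \<and> \<not>(\<exists>y. y * y = u)}"

lemma card_sqset:
  assumes "odd (card (UNIV :: 'a::{finite,field} set))"
  shows "2 * card (sqset :: 'a set) = card (UNIV :: 'a set) - 1"
proof -
  have e: "eta u = of_bool (u \<in> sqset) - of_bool (u \<in> nsqset)" for u :: 'a
    by (auto simp: eta_def sqset_def nsqset_def)
  have "0 = (\<Sum>u\<in>(UNIV::'a set). eta u)" using sum_eta[OF assms] by simp
  also have "\<dots> = int (card (sqset::'a set)) - int (card (nsqset::'a set))"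
    by (simp add: e sum_subtractf)
  finally have 1: "card (sqset::'a set) = card (nsqset::'a set)" by simp
  have "sqset \<union> nsqset = UNIV - {0::'a}" by (auto simp: sqset_def nsqset_def)
  moreover have "sqset \<inter> nsqset = ({}::'a set)" by (auto simp: sqset_def nsqset_def)
  ultimately have "card (sqset::'a set) + card (nsqset::'a set) = card (UNIV::'a set) - 1"
    by (metis card_Diff_singleton card_Un_disjoint finite iso_tuple_UNIV_I)
  with 1 show ?thesis by simp
qed

lemma roots_bound:
  fixes P :: "'a::{comm_ring_1,ring_no_zero_divisors} poly"
  assumes "P \<noteq> 0" "degree P \<le> d"
  shows "card {x. poly P x = 0} \<le> d"
  using card_poly_roots_bound[OF assms(1)] assms(2) by linarith

lemma euler_eta:
  assumes "odd (card (UNIV :: 'a::{finite,field} set))"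
  shows "of_int (eta (u::'a)) = u ^ ((card (UNIV :: 'a set) - 1) div 2)"
proof -
  define q where "q = card (UNIV :: 'a set)"
  define h where "h = (q - 1) div 2"
  have q3: "q \<ge> 3" using card_ge_3[OF assms] q_def by simp
  have h2: "2 * h = q - 1" using assms q_def h_def by simp
  have h1: "h \<ge> 1" using q3 h2 by simp
  define P :: "'a poly" where "P = monom 1 h - 1"
  have cP: "coeff P h = 1" using h1 by (simp add: P_def)
  have P0: "P \<noteq> 0" using cP by auto
  have dP: "degree P \<le> h" unfolding P_def
    by (rule degree_diff_le) (simp_all add: degree_monom_le)
  have roots: "card {x. poly P x = 0} \<le> h" by (rule roots_bound[OF P0 dP])
  have pP: "poly P x = x ^ h - 1" for x by (simp add: P_def poly_monom)
  have pow1: "x ^ (q - 1) = 1" if "x \<noteq> 0" for x :: 'a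
  proof -
    have "x * x ^ (q - 1) = x ^ q" using q3 by (metis One_nat_def Suc_pred le_trans not_le not_numeral_le_zero power_Suc zero_less_Suc)
    also have "\<dots> = x" using ff_pow_card q_def by simp
    finally show ?thesis using that by (metis mult_cancel_left1)
  qed
  have sub: "sqset \<subseteq> {x. poly P x = 0}"
  proof
    fix u :: 'a assume "u \<in> sqset"
    then obtain y where y: "y * y = u" "u \<noteq> 0" by (auto simp: sqset_def)
    then have "y \<noteq> 0" by auto
    have "u ^ h = y ^ (2 * h)" using y by (simp add: power_mult power2_eq_square)
    also have "\<dots> = 1" using h2 pow1 \<open>y \<noteq> 0\<close> by simp
    finally show "u \<in> {x. poly P x = 0}" by (simp add: pP)
  qed
  have "card (sqset::'a set) = h" using card_sqset[OF assms] h_def q_def by simp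
  then have eqS: "sqset = {x. poly P x = 0}"
    using sub roots card_mono[OF _ sub] by (intro card_subset_eq) auto
  show ?thesis
  proof (cases "u = 0")
    case True then show ?thesis using h1 q_def h_def by simp
  next
    case u0: False
    show ?thesis
    proof (cases "u \<in> sqset")
      case True
      then have "eta u = 1" by (auto simp: eta_def sqset_def)
      moreover have "u ^ h = 1"
      proof -
        have "poly P u = 0" using True sub by blast
        then show ?thesis by (simp add: pP)
      qed
      ultimately show ?thesis using q_def h_def by simp
    next
      case False
      then have et: "eta u = -1" using u0 by (auto simp: eta_def sqset_def)
      have "u ^ h \<noteq> 1" using False eqS pP by auto
      moreover have "(u ^ h) * (u ^ h) = 1" using pow1[OF u0] h2 by (metis mult_2 power_add)
      ultimately have "u ^ h = -1"
      proof -
        have "(u ^ h - 1) * (u ^ h + 1) = 0" using \<open>(u ^ h) * (u ^ h) = 1\<close> by (simp add: algebra_simps)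
        then show ?thesis using \<open>u ^ h \<noteq> 1\<close> by (simp add: eq_neg_iff_add_eq_0)
      qed
      then show ?thesis using et q_def h_def by simp
    qed
  qed
qed

lemma of_int_eta_inj:
  assumes "(2::'a::field) \<noteq> 0" "a \<in> {-1,0,1}" "b \<in> {-1,0,1::int}" "(of_int a :: 'a) = of_int b"
  shows "a = b"
proof -
  have "(1::'a) \<noteq> -1" using assms(1) by (metis add_eq_0_iff2 one_add_one)
  then show ?thesis using assms by auto
qed

lemma eta_mult:
  assumes "odd (card (UNIV :: 'a::{finite,field} set))"
  shows "eta (x * y :: 'a) = eta x * eta y"
proof -
  have "(of_int (eta (x * y)) :: 'a) = of_int (eta x * eta y)"
  proof -
    have "(of_int (eta (x * y)) :: 'a) = (x*y) ^ ((card (UNIV :: 'a set) - 1) div 2)" by (rule euler_eta[OF assms])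
    also have "\<dots> = x ^ ((card (UNIV :: 'a set) - 1) div 2) * y ^ ((card (UNIV :: 'a set) - 1) div 2)"
      by (simp add: power_mult_distrib)
    also have "\<dots> = of_int (eta x) * of_int (eta y)" by (simp add: euler_eta[OF assms])
    finally show ?thesis by simp
  qed
  moreover have "eta x * eta y \<in> {-1,0,1}" using eta_cases[of x] eta_cases[of y] by auto
  moreover have "eta (x*y) \<in> {-1,0,1}" using eta_cases[of "x*y"] by auto
  ultimately show ?thesis using of_int_eta_inj ff_two_ne0[OF assms] by blast
qed

lemma eta_minus1:
  assumes "odd (card (UNIV :: 'a::{finite,field} set))"
  shows "eta (-1 :: 'a) = (-1) ^ ((card (UNIV :: 'a set) - 1) div 2)"
proof -
  have "(of_int (eta (-1::'a)) :: 'a) = of_int ((-1) ^ ((card (UNIV :: 'a set) - 1) div 2))"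
    using euler_eta[OF assms] by simp
  moreover have "((-1::int) ^ ((card (UNIV :: 'a set) - 1) div 2)) \<in> {-1,0,1}"
    by (cases "even ((card (UNIV :: 'a set) - 1) div 2)") auto
  moreover have "eta (-1::'a) \<in> {-1,0,1}" using eta_cases[of "-1::'a"] by auto
  ultimately show ?thesis using of_int_eta_inj ff_two_ne0[OF assms] by blast
qed

lemma eta_sq: "x \<noteq> 0 \<Longrightarrow> eta (x * x) = 1"
  by (auto simp: eta_def)

lemma eta_sqr: "x \<noteq> 0 \<Longrightarrow> eta x * eta x = 1"
  by (auto simp: eta_def)

lemma eta_inverse:
  assumes "odd (card (UNIV :: 'a::{finite,field} set))"
  shows "eta (inverse x :: 'a) = eta x"
proof (cases "x = 0")
  case False
  have "eta x = eta ((x * x) * inverse x)" using False by (simp add: field_simps)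
  also have "\<dots> = eta (inverse x)" using eta_mult[OF assms] eta_sq[OF False] by simp
  finally show ?thesis by simp
qed simp

lemma sum_eta_affine:
  assumes "odd (card (UNIV :: 'a::{finite,field} set))" "b \<noteq> 0"
  shows "(\<Sum>u\<in>(UNIV::'a set). eta (a + b * u)) = 0"
proof -
  have "(\<Sum>u\<in>(UNIV::'a set). eta (a + b * u)) = (\<Sum>v\<in>(UNIV::'a set). eta v)"
    by (rule sum.reindex_bij_witness[of _ "\<lambda>v. (v - a) / b" "\<lambda>u. a + b * u"]) (use assms(2) in auto)
  then show ?thesis using sum_eta[OF assms(1)] by simp
qed

lemma jacobi_eta:
  assumes "odd (card (UNIV :: 'a::{finite,field} set))" "l \<noteq> 0"
  shows "(\<Sum>u\<in>(UNIV::'a set). eta u * eta (t - l * u)) =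
         (if t = 0 then int (card (UNIV :: 'a set)) - 1 else -1) * eta (- l)"
proof (cases "t = 0")
  case True
  have "(\<Sum>u\<in>(UNIV::'a set). eta u * eta (t - l * u)) = (\<Sum>u\<in>(UNIV::'a set). of_bool (u \<noteq> 0) * eta (- l))"
  proof (intro sum.cong refl)
    fix u :: 'a
    show "eta u * eta (t - l * u) = of_bool (u \<noteq> 0) * eta (- l)"
    proof (cases "u = 0")
      case False
      have "eta u * eta (t - l * u) = eta u * eta u * eta (- l)"
        using True eta_mult[OF assms(1), of "-l" u] by (simp add: mult_ac)
      then show ?thesis using eta_sqr[OF False] False by simp
    qed simp
  qed
  also have "\<dots> = int (card (UNIV - {0::'a})) * eta (- l)"
    by (simp only: sum_of_bool_mult_eq finite) (simp add: Int_def Diff_eq Compl_eq)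
  also have "\<dots> = (int (card (UNIV :: 'a set)) - 1) * eta (- l)"
    using finite_UNIV_card_ge_0[where 'a='a] by (simp add: card_Diff_singleton of_nat_diff)
  finally show ?thesis using True by simp
next
  case False
  have "(\<Sum>u\<in>(UNIV::'a set). eta u * eta (t - l * u)) = (\<Sum>u\<in>UNIV - {0::'a}. eta u * eta (t - l * u))"
    by (rule sum.mono_neutral_right) auto
  also have "\<dots> = (\<Sum>u\<in>UNIV - {0::'a}. eta (t / u - l))"
  proof (intro sum.cong refl)
    fix u :: 'a assume "u \<in> UNIV - {0}"
    then have u0: "u \<noteq> 0" by simp
    have "eta u * eta (t - l * u) = eta (u * (t - l * u))" using eta_mult[OF assms(1)] by simp
    also have "u * (t - l * u) = (u * u) * (t / u - l)" using u0 by (simp add: field_simps)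
    also have "eta \<dots> = eta (t / u - l)" using eta_mult[OF assms(1)] eta_sq[OF u0] by simp
    finally show "eta u * eta (t - l * u) = eta (t / u - l)" .
  qed
  also have "\<dots> = (\<Sum>v\<in>UNIV - {0::'a}. eta (v - l))"
    by (rule sum.reindex_bij_witness[of _ "\<lambda>v. t / v" "\<lambda>u. t / u"]) (use False in auto)
  also have "\<dots> = (\<Sum>v\<in>(UNIV::'a set). eta (v - l)) - eta (0 - l)"
    by (simp add: sum_diff1)
  also have "(\<Sum>v\<in>(UNIV::'a set). eta (v - l)) = 0"
    using sum_eta_affine[OF assms(1), of 1 "-l"] by (simp add: add.commute)
  finally show ?thesis using False by simp
qed



definition coords :: "nat \<Rightarrow> (nat \<Rightarrow> 'a::zero) set" where
  "coords n = {c. \<forall>i\<ge>n. c i = 0}"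

lemma coords_0: "coords 0 = {\<lambda>_. 0}"
  by (auto simp: coords_def)

lemma coords_Suc_bij:
  "bij_betw (\<lambda>(c, x). c(n := x)) (coords n \<times> UNIV) (coords (Suc n))"
  by (rule bij_betw_byWitness[where f' = "\<lambda>c. (c(n := 0), c n)"]) (auto simp: coords_def fun_eq_iff)

lemma finite_coords: "finite (coords n :: (nat \<Rightarrow> 'a::{finite,zero}) set)"
proof (induction n)
  case 0 then show ?case by (simp add: coords_0)
next
  case (Suc n)
  have "coords (Suc n) = (\<lambda>(c, x). c(n := x)) ` (coords n \<times> (UNIV :: 'a set))"
    using coords_Suc_bij[of n, where 'a='a] by (simp add: bij_betw_def)
  then show ?case using Suc by simp
qed

lemma card_coords: "card (coords n :: (nat \<Rightarrow> 'a::{finite,zero}) set) = card (UNIV :: 'a set) ^ n"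
proof (induction n)
  case 0 then show ?case by (simp add: coords_0)
next
  case (Suc n)
  have "card (coords (Suc n) :: (nat \<Rightarrow> 'a) set) = card ((coords n :: (nat \<Rightarrow> 'a) set) \<times> (UNIV :: 'a set))"
    using bij_betw_same_card[OF coords_Suc_bij[of n, where 'a='a]] by simp
  then show ?case using Suc by (simp add: card_cartesian_product)
qed

lemma card_pairs_sum:
  fixes A :: "'b set"
  assumes "finite A"
  shows "card {(c, x::'a::finite). c \<in> A \<and> P c x} = (\<Sum>x\<in>UNIV. card {c\<in>A. P c x})"
proof -
  have "{(c, x::'a). c \<in> A \<and> P c x} = (\<lambda>(x, c). (c, x)) ` (SIGMA x:UNIV. {c\<in>A. P c x})"
    by auto
  moreover have "inj_on (\<lambda>(x, c). (c, x)) (SIGMA x:(UNIV::'a set). {c\<in>A. P c x})"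
    by (auto simp: inj_on_def)
  ultimately have "card {(c, x::'a). c \<in> A \<and> P c x} = card (SIGMA x:(UNIV::'a set). {c\<in>A. P c x})"
    by (simp add: card_image)
  also have "\<dots> = (\<Sum>x\<in>UNIV. card {c\<in>A. P c x})"
    using assms by (simp add: card_SigmaI)
  finally show ?thesis .
qed

lemma card_coords_Suc_pred:
  "card {c \<in> (coords (Suc n) :: (nat \<Rightarrow> 'a::{finite,zero}) set). P c}
     = (\<Sum>x\<in>UNIV. card {c \<in> coords n. P (c(n := x))})"
proof -
  have bij: "bij_betw (\<lambda>(c, x). c(n := x)) (coords n \<times> (UNIV::'a set)) (coords (Suc n))"
    by (rule coords_Suc_bij)
  have "{c \<in> (coords (Suc n) :: (nat \<Rightarrow> 'a) set). P c}
        = (\<lambda>(c, x). c(n := x)) ` {(c, x::'a). c \<in> coords n \<and> P (c(n := x))}"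
  proof -
    have "coords (Suc n) = (\<lambda>(c, x). c(n := x)) ` (coords n \<times> (UNIV::'a set))"
      using bij by (simp add: bij_betw_def)
    then show ?thesis by auto
  qed
  moreover have "inj_on (\<lambda>(c, x). c(n := x)) {(c, x::'a). c \<in> coords n \<and> P (c(n := x))}"
    using bij unfolding bij_betw_def by (rule inj_on_subset[OF conjunct1]) auto
  ultimately have "card {c \<in> (coords (Suc n) :: (nat \<Rightarrow> 'a) set). P c}
       = card {(c, x::'a). c \<in> coords n \<and> P (c(n := x))}"
    by (simp add: card_image)
  also have "\<dots> = (\<Sum>x\<in>UNIV. card {c \<in> coords n. P (c(n := x))})"
    by (rule card_pairs_sum[OF finite_coords])
  finally show ?thesis .
qed

lemma card_coords_indep:
  assumes "\<And>c x. P (c(n := x)) = P c"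
  shows "card {c \<in> (coords (Suc n) :: (nat \<Rightarrow> 'a::{finite,zero}) set). P c}
     = card (UNIV :: 'a set) * card {c \<in> coords n. P c}"
  using card_coords_Suc_pred[of n P] assms by simp

section \<open>Counting solutions of diagonal quadratic equations\<close>

definition dcount :: "nat \<Rightarrow> (nat \<Rightarrow> 'a::{finite,field}) \<Rightarrow> 'a \<Rightarrow> nat" where
  "dcount r lam t = card {c \<in> coords r. (\<Sum>i<r. lam i * (c i)^2) = t}"

lemma dcount_0: "dcount 0 lam t = (if t = 0 then 1 else 0)"
  by (simp add: dcount_def coords_0)

lemma dcount_Suc: "dcount (Suc r) lam t = (\<Sum>x\<in>UNIV. dcount r lam (t - lam r * x^2))"
proof -
  have "dcount (Suc r) lam t = (\<Sum>x\<in>UNIV. card {c \<in> coords r. (\<Sum>i<Suc r. lam i * ((c(r := x)) i)^2) = t})"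
    unfolding dcount_def by (rule card_coords_Suc_pred)
  also have "\<dots> = (\<Sum>x\<in>UNIV. dcount r lam (t - lam r * x^2))"
  proof (intro sum.cong refl)
    fix x
    have "(\<Sum>i<Suc r. lam i * ((c(r := x)) i)^2) = (\<Sum>i<r. lam i * (c i)^2) + lam r * x^2" for c :: "nat \<Rightarrow> 'a"
      by simp
    then have "{c \<in> coords r. (\<Sum>i<Suc r. lam i * ((c(r := x)) i)^2) = t}
             = {c \<in> coords r. (\<Sum>i<r. lam i * (c i)^2) = t - lam r * x^2}"
      by (auto simp: algebra_simps)
    then show "card {c \<in> coords r. (\<Sum>i<Suc r. lam i * ((c(r := x)) i)^2) = t} = dcount r lam (t - lam r * x^2)"
      by (simp add: dcount_def)
  qed
  finally show ?thesis .
qed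

lemma card_sq_eq:
  assumes "odd (card (UNIV :: 'a::{finite,field} set))" "l \<noteq> 0"
  shows "int (card {x::'a. t - l * x^2 = 0}) = 1 + eta t * eta l"
proof -
  have "{x::'a. t - l * x^2 = 0} = {x. x * x = t / l}"
    using assms(2) by (auto simp: field_simps power2_eq_square)
  then have "int (card {x::'a. t - l * x^2 = 0}) = 1 + eta (t / l)"
    using sq_fiber[OF assms(1)] by simp
  also have "eta (t / l) = eta t * eta l"
    using eta_mult[OF assms(1)] eta_inverse[OF assms(1)] by (simp add: divide_inverse)
  finally show ?thesis .
qed

lemma sum_sq_shift:
  assumes "odd (card (UNIV :: 'a::{finite,field} set))"
  shows "(\<Sum>x\<in>(UNIV::'a set). f (t - l * x^2)) = (\<Sum>u\<in>(UNIV::'a set). (1 + eta u) * (f (t - l * u) :: int))"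
  using sum_eta_fiber[OF assms, of "\<lambda>u. f (t - l * u)"] by (simp add: power2_eq_square)

lemma dcount_formula:
  fixes lam :: "nat \<Rightarrow> 'a::{finite,field}"
  assumes odd: "odd (card (UNIV :: 'a set))" and "\<forall>i<r. lam i \<noteq> 0" and "r \<ge> 1"
  shows "int (dcount r lam t) =
    (if even r then int (card (UNIV::'a set))^(r-1) + (if t = 0 then int (card (UNIV::'a set)) - 1 else -1)
         * int (card (UNIV::'a set))^(r div 2 - 1) * eta ((-1)^(r div 2) * (\<Prod>i<r. lam i))
     else int (card (UNIV::'a set))^(r-1) + int (card (UNIV::'a set))^((r-1) div 2)
         * eta ((-1)^((r-1) div 2) * t * (\<Prod>i<r. lam i)))"
  using assms(2,3)
proof (induction r arbitrary: t)
  case 0 then show ?case by simp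
next
  case (Suc r)
  define Q where "Q = int (card (UNIV::'a set))"
  define l where "l = lam r"
  define D where "D = (\<Prod>i<r. lam i)"
  have l0: "l \<noteq> 0" using Suc.prems l_def by simp
  have DS: "(\<Prod>i<Suc r. lam i) = D * l" by (simp add: D_def l_def)
  have step: "int (dcount (Suc r) lam t) = (\<Sum>x\<in>(UNIV::'a set). int (dcount r lam (t - l * x^2)))"
    by (simp add: dcount_Suc l_def)
  show ?case
  proof (cases "r = 0")
    case True
    have "int (dcount (Suc r) lam t) = (\<Sum>x\<in>(UNIV::'a set). of_bool (t - l * x^2 = 0))"
      unfolding step using True by (intro sum.cong refl) (simp add: dcount_0)
    also have "\<dots> = int (card {x::'a. t - l * x^2 = 0})"
      by (simp only: sum_of_bool_eq finite) simp
    also have "\<dots> = 1 + eta t * eta l" by (rule card_sq_eq[OF odd l0])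
    finally show ?thesis using True l_def eta_mult[OF odd] by simp
  next
    case False
    then have r1: "r \<ge> 1" by simp
    have QQ: "Q * Q^(r-1) = Q^r" using r1 by (cases r) simp_all
    have IH: "\<And>s. int (dcount r lam s) =
      (if even r then Q^(r-1) + (if s = 0 then Q - 1 else -1) * Q^(r div 2 - 1) * eta ((-1)^(r div 2) * D)
       else Q^(r-1) + Q^((r-1) div 2) * eta ((-1)^((r-1) div 2) * s * D))"
      using Suc.IH[OF _ r1] Suc.prems Q_def D_def by simp
    show ?thesis
    proof (cases "even r")
      case True
      define E where "E = eta ((-1)^(r div 2) * D)"
      have "int (dcount (Suc r) lam t) = (\<Sum>x\<in>(UNIV::'a set). Q^(r-1) + (Q * of_bool (t - l * x^2 = 0) - 1) * (Q^(r div 2 - 1) * E))"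
        unfolding step using IH True by (intro sum.cong refl) (simp add: E_def)
      also have "\<dots> = (\<Sum>x\<in>(UNIV::'a set). (Q^(r-1) - Q^(r div 2 - 1) * E) + (Q * (Q^(r div 2 - 1) * E)) * of_bool (t - l * x^2 = 0))"
        by (intro sum.cong refl) (simp add: algebra_simps)
      also have "\<dots> = Q * (Q^(r-1) - Q^(r div 2 - 1) * E) + (Q * (Q^(r div 2 - 1) * E)) * (\<Sum>x\<in>(UNIV::'a set). of_bool (t - l * x^2 = 0))"
        by (simp only: sum.distrib sum_distrib_left[symmetric] sum_constant Q_def)
      also have "(\<Sum>x\<in>(UNIV::'a set). (of_bool (t - l * x^2 = 0) :: int)) = int (card {x::'a. t - l * x^2 = 0})"
        by (simp only: sum_of_bool_eq finite) simp
      also have "Q * (Q^(r-1) - Q^(r div 2 - 1) * E) + Q * (Q^(r div 2 - 1) * E) * int (card {x::'a. t - l * x^2 = 0})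
          = Q * Q^(r-1) + (Q * int (card {x::'a. t - l * x^2 = 0}) - Q) * (Q^(r div 2 - 1) * E)"
        by (simp add: algebra_simps)
      also have "\<dots> = Q^r + Q * Q^(r div 2 - 1) * E * eta t * eta l"
        using card_sq_eq[OF odd l0, of t] QQ by (simp add: algebra_simps)
      also have "Q * Q^(r div 2 - 1) = Q^(r div 2)"
      proof -
        have "r div 2 \<ge> 1" using True r1 by presburger
        then show ?thesis by (cases "r div 2") simp_all
      qed
      also have "Q^(r div 2) * E * eta t * eta l = Q^(r div 2) * (E * eta t * eta l)" by (simp add: mult_ac)
      also have "E * eta t * eta l = eta ((-1)^(r div 2) * t * (D * l))"
        unfolding E_def using eta_mult[OF odd] by (simp add: mult_ac)
      finally show ?thesis using True DS Q_def by simp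
    next
      case False
      define c where "c = (-1)^((r-1) div 2) * D"
      have e1: "eta ((-1)^((r-1) div 2) * s * D) = eta c * eta s" for s
        unfolding c_def using eta_mult[OF odd] by (simp add: mult_ac)
      have "int (dcount (Suc r) lam t) = (\<Sum>x\<in>(UNIV::'a set). Q^(r-1) + Q^((r-1) div 2) * eta c * eta (t - l * x^2))"
        unfolding step using IH False e1 by (intro sum.cong refl) (simp add: mult_ac)
      also have "\<dots> = Q * Q^(r-1) + Q^((r-1) div 2) * eta c * (\<Sum>x\<in>(UNIV::'a set). eta (t - l * x^2))"
        by (simp add: sum.distrib sum_distrib_left Q_def)
      also have "(\<Sum>x\<in>(UNIV::'a set). eta (t - l * x^2)) = (\<Sum>u\<in>(UNIV::'a set). (1 + eta u) * eta (t - l * u))"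
        by (rule sum_sq_shift[OF odd])
      also have "\<dots> = (\<Sum>u\<in>(UNIV::'a set). eta (t - l * u)) + (\<Sum>u\<in>(UNIV::'a set). eta u * eta (t - l * u))"
        by (simp add: algebra_simps sum.distrib)
      also have "(\<Sum>u\<in>(UNIV::'a set). eta (t - l * u)) = 0"
        using sum_eta_affine[OF odd, of "-l" t] l0 by simp
      also have "(\<Sum>u\<in>(UNIV::'a set). eta u * eta (t - l * u)) = (if t = 0 then Q - 1 else -1) * eta (- l)"
        using jacobi_eta[OF odd l0] Q_def by simp
      finally have X: "int (dcount (Suc r) lam t) = Q^r + (if t = 0 then Q - 1 else -1) * Q^((r-1) div 2) * (eta c * eta (-l))"
        using QQ by (simp add: algebra_simps)
      have "eta c * eta (-l) = eta ((-1)^(Suc r div 2) * (D * l))"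
      proof -
        have "(-1::'a)^(Suc r div 2) = (-1)^((r-1) div 2) * (-1)"
        proof -
          have "Suc r div 2 = Suc ((r-1) div 2)" using False r1 by presburger
          then show ?thesis by simp
        qed
        then have "(-1)^(Suc r div 2) * (D * l) = c * (- l)" unfolding c_def by (simp add: algebra_simps)
        then show ?thesis using eta_mult[OF odd, of c "-l"] by simp
      qed
      moreover have "(r-1) div 2 = Suc r div 2 - 1" using False r1 by presburger
      ultimately show ?thesis using X DS False Q_def by simp
    qed
  qed
qed



section \<open>Embeddings\<close>

lemma emb_add: "is_emb e \<Longrightarrow> e (x + y) = e x + e y"
  unfolding is_emb_def by blast

lemma emb_0: "is_emb e \<Longrightarrow> e 0 = 0"
proof -
  assume h: "is_emb e"
  have "e 0 = e 0 + e 0" using emb_add[OF h, of 0 0] by simp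
  then show ?thesis by (metis add_cancel_right_right)
qed

lemma emb_mult: "is_emb e \<Longrightarrow> e (x * y) = e x * e y"
  unfolding is_emb_def by blast

lemma emb_1: "is_emb e \<Longrightarrow> e 1 = 1"
  unfolding is_emb_def by blast

lemma emb_inj: "is_emb e \<Longrightarrow> e x = e y \<longleftrightarrow> x = y"
  unfolding is_emb_def inj_def by blast

lemma emb_neg: "is_emb e \<Longrightarrow> e (- x) = - e x"
proof -
  assume h: "is_emb e"
  have "e (- x) + e x = 0" using emb_add[OF h, of "-x" x] emb_0[OF h] by simp
  then show ?thesis by (simp add: eq_neg_iff_add_eq_0)
qed

lemma emb_diff: "is_emb e \<Longrightarrow> e (x - y) = e x - e y"
proof -
  assume h: "is_emb e"
  have "e (x + - y) = e x + - e y" using emb_add[OF h, of x "-y"] emb_neg[OF h, of y] by simp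
  then show ?thesis by simp
qed

lemma emb_sum: "is_emb e \<Longrightarrow> e (\<Sum>i\<in>A. f i) = (\<Sum>i\<in>A. e (f i))"
  by (induction A rule: infinite_finite_induct) (simp_all add: emb_0 emb_add)

lemma emb_of_nat: "is_emb e \<Longrightarrow> e (of_nat n) = of_nat n"
  by (induction n) (simp_all add: emb_0 emb_add emb_1)

lemma emb_power: "is_emb e \<Longrightarrow> e (x ^ n) = e x ^ n"
  by (induction n) (simp_all add: emb_mult emb_1)

lemma emb_inverse:
  fixes e :: "'a::field \<Rightarrow> 'b::field"
  shows "is_emb e \<Longrightarrow> e (inverse x) = inverse (e x)"
proof (cases "x = 0")
  case True
  assume "is_emb e" then show ?thesis using True by (simp add: emb_0)
next
  case False
  assume h: "is_emb e"
  have "e x * e (inverse x) = 1" using False h by (simp add: emb_mult[symmetric] emb_1)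
  from inverse_unique[OF this] show ?thesis by simp
qed

definition phi :: "('a::field \<Rightarrow> 'b::field) \<Rightarrow> nat \<Rightarrow> (nat \<Rightarrow> 'b) \<Rightarrow> (nat \<Rightarrow> 'a) \<Rightarrow> 'b" where
  "phi e n \<beta> c = (\<Sum>i<n. e (c i) * \<beta> i)"

lemma is_basis_phi: "is_basis e n \<beta> \<longleftrightarrow> bij_betw (phi e n \<beta>) (coords n) UNIV"
  unfolding is_basis_def phi_def coords_def by (simp add: fun_eq_iff)

lemma phi_add: "is_emb e \<Longrightarrow> phi e n \<beta> (\<lambda>i. c i + d i) = phi e n \<beta> c + phi e n \<beta> d"
  by (simp add: phi_def emb_add distrib_right sum.distrib)

lemma phi_scale: "is_emb e \<Longrightarrow> phi e n \<beta> (\<lambda>i. a * c i) = e a * phi e n \<beta> c"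
  by (simp add: phi_def emb_mult sum_distrib_left mult_ac)

lemma phi_diff: "is_emb e \<Longrightarrow> phi e n \<beta> (\<lambda>i. c i - d i) = phi e n \<beta> c - phi e n \<beta> d"
  by (simp add: phi_def emb_diff left_diff_distrib sum_subtractf)

lemma phi_cong: "(\<And>i. i < n \<Longrightarrow> c i = d i) \<Longrightarrow> phi e n \<beta> c = phi e n \<beta> d"
  by (simp add: phi_def)

lemma phi_Suc: "phi e (Suc n) \<beta> c = phi e n \<beta> c + e (c n) * \<beta> n"
  by (simp add: phi_def)

lemma phi_Suc_shift: "phi e (Suc n) \<beta> c = e (c 0) * \<beta> 0 + phi e n (\<lambda>i. \<beta> (Suc i)) (\<lambda>i. c (Suc i))"
  unfolding phi_def by (rule sum.lessThan_Suc_shift)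

section \<open>Quadratic forms\<close>

definition subsp :: "('a::field \<Rightarrow> 'b::field) \<Rightarrow> 'b set \<Rightarrow> bool" where
  "subsp e W \<longleftrightarrow> 0 \<in> W \<and> (\<forall>x\<in>W. \<forall>y\<in>W. x + y \<in> W) \<and> (\<forall>a. \<forall>x\<in>W. e a * x \<in> W)"

lemma subsp_sum:
  assumes "subsp e W" "\<And>i. i \<in> A \<Longrightarrow> f i \<in> W"
  shows "(\<Sum>i\<in>A. f i) \<in> W"
  using assms(2)
proof (induction A rule: infinite_finite_induct)
  case (infinite A) then show ?case using assms(1) by (simp add: subsp_def)
next
  case empty then show ?case using assms(1) by (simp add: subsp_def)
next
  case (insert x F) then show ?case using assms(1) by (simp add: subsp_def)
qed

lemma subsp_phi:
  assumes "subsp e W" "\<And>i. \<beta> i \<in> W"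
  shows "phi e n \<beta> c \<in> W"
  unfolding phi_def using assms by (intro subsp_sum) (auto simp: subsp_def)

lemma subsp_neg:
  assumes "is_emb e" "subsp e W" "x \<in> W"
  shows "- x \<in> W"
proof -
  have "e (-1) * x \<in> W" using assms by (simp add: subsp_def)
  then show ?thesis using assms(1) by (simp add: emb_neg emb_1)
qed

lemma subsp_diff:
  assumes "is_emb e" "subsp e W" "x \<in> W" "y \<in> W"
  shows "x - y \<in> W"
proof -
  have "x + - y \<in> W" using subsp_neg[OF assms(1,2,4)] assms(2,3) unfolding subsp_def by blast
  then show ?thesis by simp
qed

locale qf =
  fixes e :: "'a::{finite,field} \<Rightarrow> 'b::{finite,field}" and Q :: "'b \<Rightarrow> 'a"
  assumes emb: "is_emb e" and qfm: "is_qform e Q" and two: "(2::'a) \<noteq> 0"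
begin

abbreviation B where "B \<equiv> polar Q"

lemma Q_scale: "Q (e a * x) = a^2 * Q x"
  using qfm unfolding is_qform_def by blast
lemma B_add_l: "B (x + x') y = B x y + B x' y"
  using qfm unfolding is_qform_def by blast
lemma B_add_r: "B x (y + y') = B x y + B x y'"
  using qfm unfolding is_qform_def by blast
lemma B_scale_l: "B (e a * x) y = a * B x y"
  using qfm unfolding is_qform_def by blast
lemma B_scale_r: "B x (e a * y) = a * B x y"
  using qfm unfolding is_qform_def by blast

lemma Q0: "Q 0 = 0"
  using Q_scale[of 0 0] emb_0[OF emb] by simp

lemma B_0_l: "B 0 y = 0"
  using B_scale_l[of 0 0 y] emb_0[OF emb] by simp
lemma B_0_r: "B x 0 = 0"
  using B_scale_r[of x 0 0] emb_0[OF emb] by simp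

lemma B_sym: "B x y = B y x"
  by (simp add: polar_def add.commute)

lemma e2: "e 2 = 2"
proof -
  have "e (1 + 1) = e 1 + e 1" by (rule emb_add[OF emb])
  then show ?thesis using emb_1[OF emb] by simp
qed

lemma B_self: "B x x = Q x"
proof -
  have "x + x = e 2 * x" by (simp only: e2 mult_2)
  then have "Q (x + x) = 2^2 * Q x" using Q_scale[of 2 x] by (simp only:)
  then have "Q (x + x) = 4 * Q x" by simp
  then have "B x x = (2 * Q x) / 2" by (simp add: polar_def)
  then show ?thesis using two by simp
qed

lemma Q_add: "Q (x + y) = Q x + Q y + 2 * B x y"
  using two by (simp add: polar_def field_simps)

lemma B_neg_r: "B x (- y) = - B x y"
proof -
  have "B x (- y) + B x y = 0" using B_add_r[of x "-y" y] B_0_r by simp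
  then show ?thesis by (simp add: eq_neg_iff_add_eq_0)
qed

lemma B_diff_r: "B x (y - z) = B x y - B x z"
  using B_add_r[of x y "-z"] B_neg_r[of x z] by simp

lemma B_sum_l: "B (\<Sum>i\<in>A. f i) y = (\<Sum>i\<in>A. B (f i) y)"
  by (induction A rule: infinite_finite_induct) (simp_all add: B_0_l B_add_l)

lemma B_sum_r: "B x (\<Sum>i\<in>A. f i) = (\<Sum>i\<in>A. B x (f i))"
  by (induction A rule: infinite_finite_induct) (simp_all add: B_0_r B_add_r)

lemma B_phi_l: "B (phi e n \<beta> c) y = (\<Sum>i<n. c i * B (\<beta> i) y)"
  unfolding phi_def by (simp add: B_sum_l B_scale_l)

lemma B_phi_r: "B x (phi e n \<beta> c) = (\<Sum>i<n. c i * B x (\<beta> i))"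
  unfolding phi_def by (simp add: B_sum_r B_scale_r)

lemma Q_phi_orth:
  assumes "\<And>i j. i < n \<Longrightarrow> j < n \<Longrightarrow> i \<noteq> j \<Longrightarrow> B (\<beta> i) (\<beta> j) = 0"
  shows "Q (phi e n \<beta> c) = (\<Sum>i<n. Q (\<beta> i) * (c i)^2)"
proof -
  have "Q (phi e n \<beta> c) = B (phi e n \<beta> c) (phi e n \<beta> c)" by (simp add: B_self)
  also have "\<dots> = (\<Sum>i<n. c i * B (\<beta> i) (phi e n \<beta> c))" by (rule B_phi_l)
  also have "\<dots> = (\<Sum>i<n. Q (\<beta> i) * (c i)^2)"
  proof (intro sum.cong refl)
    fix i assume i: "i \<in> {..<n}"
    have "B (\<beta> i) (phi e n \<beta> c) = (\<Sum>j<n. c j * B (\<beta> i) (\<beta> j))" by (rule B_phi_r)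
    also have "\<dots> = (\<Sum>j\<in>{i}. c j * B (\<beta> i) (\<beta> j))"
      by (rule sum.mono_neutral_right) (use i assms in auto)
    also have "\<dots> = c i * Q (\<beta> i)" by (simp add: B_self)
    finally show "c i * B (\<beta> i) (phi e n \<beta> c) = Q (\<beta> i) * (c i)^2"
      by (simp add: power2_eq_square mult_ac)
  qed
  finally show ?thesis .
qed

end

lemma card_coords_first:
  assumes "r \<le> n" and "\<And>c d. (\<forall>i<r. c i = d i) \<Longrightarrow> P c = P d"
  shows "card {c \<in> (coords n :: (nat \<Rightarrow> 'a::{finite,zero}) set). P c}
         = card (UNIV :: 'a set) ^ (n - r) * card {c \<in> coords r. P c}"
  using assms(1)
proof (induction n rule: dec_induct)
  case base then show ?case by simp
next
  case (step m)
  have "card {c \<in> (coords (Suc m) :: (nat \<Rightarrow> 'a) set). P c} = card (UNIV :: 'a set) * card {c \<in> coords m. P c}"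
    by (rule card_coords_indep) (use assms(2) step(1) in auto)
  then show ?case using step by (simp add: Suc_diff_le)
qed

lemma card_ge_2: "card (UNIV :: 'a::{finite,field} set) \<ge> 2"
proof -
  have "card {0, 1::'a} \<le> card (UNIV::'a set)" by (rule card_mono) auto
  then show ?thesis by simp
qed

context qf
begin

lemma diag_bij: "diag_form e n Q r \<beta> lam \<Longrightarrow> bij_betw (phi e n \<beta>) (coords n) UNIV"
  by (simp add: diag_form_def is_basis_phi)

lemma diag_Q: "diag_form e n Q r \<beta> lam \<Longrightarrow> Q (phi e n \<beta> c) = (\<Sum>i<r. lam i * (c i)^2)"
  by (simp add: diag_form_def phi_def)

lemma diag_lam: "diag_form e n Q r \<beta> lam \<Longrightarrow> i < r \<Longrightarrow> lam i \<noteq> 0"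
  by (simp add: diag_form_def)

lemma diag_r_le:
  assumes d: "diag_form e n Q r \<beta> lam"
  shows "r \<le> n"
proof (rule ccontr)
  assume "\<not> r \<le> n"
  then have nr: "n < r" by simp
  define c :: "nat \<Rightarrow> 'a" where "c = (\<lambda>j. if j = n then 1 else 0)"
  have "phi e n \<beta> c = phi e n \<beta> (\<lambda>_. 0)" by (rule phi_cong) (simp add: c_def)
  then have "Q (phi e n \<beta> c) = Q (phi e n \<beta> (\<lambda>_. 0))" by simp
  then have "(\<Sum>i<r. lam i * (c i)^2) = (\<Sum>i<r. lam i * ((\<lambda>_. 0::'a) i)^2)"
    by (simp only: diag_Q[OF d])
  moreover have "(\<Sum>i<r. lam i * (c i)^2) = (\<Sum>i\<in>{n}. lam i * (c i)^2)"
    by (rule sum.mono_neutral_right) (use nr in \<open>auto simp: c_def\<close>)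
  ultimately have "lam n = 0" by (simp add: c_def)
  then show False using diag_lam[OF d nr] by simp
qed

lemma diag_count:
  assumes d: "diag_form e n Q r \<beta> lam"
  shows "card {x. Q x = t} = card (UNIV :: 'a set) ^ (n - r) * dcount r lam t"
proof -
  have bij: "bij_betw (phi e n \<beta>) (coords n) UNIV" by (rule diag_bij[OF d])
  have "{x. Q x = t} = phi e n \<beta> ` {c \<in> coords n. Q (phi e n \<beta> c) = t}"
    using bij unfolding bij_betw_def by auto
  moreover have "inj_on (phi e n \<beta>) {c \<in> coords n. Q (phi e n \<beta> c) = t}"
    using bij unfolding bij_betw_def by (rule inj_on_subset[OF conjunct1]) auto
  ultimately have "card {x. Q x = t} = card {c \<in> coords n. (\<Sum>i<r. lam i * (c i)^2) = t}"
    by (simp add: card_image diag_Q[OF d])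
  also have "\<dots> = card (UNIV :: 'a set) ^ (n - r) * card {c \<in> coords r. (\<Sum>i<r. lam i * (c i)^2) = t}"
    by (rule card_coords_first[OF diag_r_le[OF d]]) simp
  finally show ?thesis by (simp add: dcount_def)
qed

lemma diag_B:
  assumes d: "diag_form e n Q r \<beta> lam"
  shows "B (phi e n \<beta> c) (phi e n \<beta> d) = (\<Sum>i<r. lam i * c i * d i)"
proof -
  have "phi e n \<beta> c + phi e n \<beta> d = phi e n \<beta> (\<lambda>i. c i + d i)" by (simp add: phi_add[OF emb])
  then have "Q (phi e n \<beta> c + phi e n \<beta> d) = (\<Sum>i<r. lam i * (c i + d i)^2)"
    using diag_Q[OF d, of "\<lambda>i. c i + d i"] by simp
  then have "Q (phi e n \<beta> c) + Q (phi e n \<beta> d) + 2 * B (phi e n \<beta> c) (phi e n \<beta> d)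
       = (\<Sum>i<r. lam i * (c i + d i)^2)"
    by (simp only: Q_add)
  then have "(\<Sum>i<r. lam i * (c i)^2) + (\<Sum>i<r. lam i * (d i)^2) + 2 * B (phi e n \<beta> c) (phi e n \<beta> d)
       = (\<Sum>i<r. lam i * (c i)^2) + (\<Sum>i<r. lam i * (d i)^2) + 2 * (\<Sum>i<r. lam i * c i * d i)"
  proof -
    have "(\<Sum>i<r. lam i * (c i + d i)^2) = (\<Sum>i<r. lam i * (c i)^2 + lam i * (d i)^2 + 2 * (lam i * c i * d i))"
      by (intro sum.cong refl) (simp add: power2_eq_square algebra_simps)
    also have "\<dots> = (\<Sum>i<r. lam i * (c i)^2) + (\<Sum>i<r. lam i * (d i)^2) + 2 * (\<Sum>i<r. lam i * c i * d i)"
      by (simp only: sum.distrib sum_distrib_left)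
    finally show ?thesis using diag_Q[OF d] \<open>Q (phi e n \<beta> c) + Q (phi e n \<beta> d) + 2 * B (phi e n \<beta> c) (phi e n \<beta> d)
       = (\<Sum>i<r. lam i * (c i + d i)^2)\<close> by simp
  qed
  then show ?thesis using two by simp
qed

lemma diag_radical:
  assumes d: "diag_form e n Q r \<beta> lam"
  shows "card (qf_radical Q) = card (UNIV :: 'a set) ^ (n - r)"
proof -
  have bij: "bij_betw (phi e n \<beta>) (coords n) UNIV" by (rule diag_bij[OF d])
  then have surj: "\<And>x. \<exists>c\<in>coords n. x = phi e n \<beta> c" unfolding bij_betw_def by auto
  have "qf_radical Q = phi e n \<beta> ` {c \<in> coords n. \<forall>i<r. c i = 0}"
  proof safe
    fix x assume x: "x \<in> qf_radical Q"
    obtain c where c: "c \<in> coords n" "x = phi e n \<beta> c" using surj by blast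
    have "c i = 0" if i: "i < r" for i
    proof -
      define dd :: "nat \<Rightarrow> 'a" where "dd = (\<lambda>j. if j = i then 1 else 0)"
      have "0 = B (phi e n \<beta> c) (phi e n \<beta> dd)" using x c by (simp add: qf_radical_def)
      also have "\<dots> = (\<Sum>j<r. lam j * c j * dd j)" by (rule diag_B[OF d])
      also have "\<dots> = (\<Sum>j\<in>{i}. lam j * c j * dd j)"
        by (rule sum.mono_neutral_right) (use i in \<open>auto simp: dd_def\<close>)
      also have "\<dots> = lam i * c i" by (simp add: dd_def)
      finally show ?thesis using diag_lam[OF d i] by simp
    qed
    then show "x \<in> phi e n \<beta> ` {c \<in> coords n. \<forall>i<r. c i = 0}" using c by blast
  next
    fix c :: "nat \<Rightarrow> 'a" assume c: "c \<in> coords n" "\<forall>i<r. c i = 0"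
    show "phi e n \<beta> c \<in> qf_radical Q"
      unfolding qf_radical_def
    proof safe
      fix y
      obtain dd where "dd \<in> coords n" "y = phi e n \<beta> dd" using surj by blast
      then show "B (phi e n \<beta> c) y = 0" using diag_B[OF d, of c dd] c by simp
    qed
  qed
  moreover have "inj_on (phi e n \<beta>) {c \<in> coords n. \<forall>i<r. c i = 0}"
    using bij unfolding bij_betw_def by (rule inj_on_subset[OF conjunct1]) auto
  ultimately have "card (qf_radical Q) = card {c \<in> (coords n :: (nat \<Rightarrow> 'a) set). \<forall>i<r. c i = 0}"
    by (simp add: card_image)
  also have "\<dots> = card (UNIV :: 'a set) ^ (n - r) * card {c \<in> (coords r :: (nat \<Rightarrow> 'a) set). \<forall>i<r. c i = 0}"
    by (rule card_coords_first[OF diag_r_le[OF d]]) auto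
  also have "{c \<in> (coords r :: (nat \<Rightarrow> 'a) set). \<forall>i<r. c i = 0} = {\<lambda>_. 0}"
  proof (rule set_eqI, rule iffI)
    fix c :: "nat \<Rightarrow> 'a" assume h: "c \<in> {c \<in> coords r. \<forall>i<r. c i = 0}"
    have "c i = 0" for i
    proof (cases "i < r")
      case True then show ?thesis using h by blast
    next
      case False then show ?thesis using h unfolding coords_def by simp
    qed
    then have "c = (\<lambda>_. 0)" by (rule ext)
    then show "c \<in> {\<lambda>_. 0}" by simp
  next
    fix c :: "nat \<Rightarrow> 'a" assume "c \<in> {\<lambda>_. 0}"
    then show "c \<in> {c \<in> coords r. \<forall>i<r. c i = 0}" by (simp add: coords_def)
  qed
  finally show ?thesis by simp
qed

lemma diag_rank:
  assumes d: "diag_form e n Q r \<beta> lam"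
  shows "qf_rank n Q = r"
proof -
  have q2: "card (UNIV :: 'a set) \<ge> 2" by (rule card_ge_2)
  have "(THE k. card (qf_radical Q) = card (UNIV :: 'a set) ^ k) = n - r"
  proof (rule the_equality)
    show "card (qf_radical Q) = card (UNIV :: 'a set) ^ (n - r)" by (rule diag_radical[OF d])
  next
    fix k assume "card (qf_radical Q) = card (UNIV :: 'a set) ^ k"
    then have "card (UNIV :: 'a set) ^ k = card (UNIV :: 'a set) ^ (n - r)" using diag_radical[OF d] by simp
    then show "k = n - r" using q2 by (simp add: power_inject_exp)
  qed
  then show ?thesis using diag_r_le[OF d] by (simp add: qf_rank_def)
qed


lemma phi_j_upd: "phi e j (\<beta>(j := w)) c = phi e j \<beta> c"
  by (simp add: phi_def)

lemma basis_ex: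
  assumes W: "subsp e W" and cW: "card W = card (UNIV::'a set) ^ k"
  shows "\<exists>\<beta>. (\<forall>i. \<beta> i \<in> W) \<and> bij_betw (phi e k \<beta>) (coords k) W"
proof -
  have q2: "card (UNIV :: 'a set) \<ge> 2" by (rule card_ge_2)
  have main: "\<exists>\<beta>. (\<forall>i. \<beta> i \<in> W) \<and> inj_on (phi e j \<beta>) (coords j)" if "j \<le> k" for j
    using that
  proof (induction j)
    case 0
    have "(\<forall>i. (\<lambda>_. 0) i \<in> W)" using W by (simp add: subsp_def)
    moreover have "inj_on (phi e 0 (\<lambda>_. 0)) (coords 0)" by (simp add: coords_0)
    ultimately show ?case by (intro exI[of _ "\<lambda>_. 0"]) simp
  next
    case (Suc j)
    then obtain \<beta> where \<beta>W: "\<forall>i. \<beta> i \<in> W" and inj: "inj_on (phi e j \<beta>) (coords j)" by auto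
    define I where "I = phi e j \<beta> ` coords j"
    have IW: "I \<subseteq> W" unfolding I_def using subsp_phi[OF W] \<beta>W by auto
    have cI: "card I = card (UNIV::'a set) ^ j" unfolding I_def using card_image[OF inj] card_coords by metis
    have "card (UNIV::'a set) ^ j < card (UNIV::'a set) ^ k"
      using Suc.prems q2 by (intro power_strict_increasing) auto
    then have "\<not> W \<subseteq> I" using cI cW card_mono[of I W] finite by (metis leD)
    then obtain w where w: "w \<in> W" "w \<notin> I" by blast
    define \<beta>' where "\<beta>' = \<beta>(j := w)"
    have \<beta>'W: "\<forall>i. \<beta>' i \<in> W" using \<beta>W w by (simp add: \<beta>'_def)
    have ph: "phi e (Suc j) \<beta>' c = phi e j \<beta> c + e (c j) * w" for c
      by (simp add: phi_Suc \<beta>'_def phi_j_upd)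
    have "inj_on (phi e (Suc j) \<beta>') (coords (Suc j))"
    proof (rule inj_onI)
      fix c c' :: "nat \<Rightarrow> 'a" assume c: "c \<in> coords (Suc j)" "c' \<in> coords (Suc j)"
        and eq: "phi e (Suc j) \<beta>' c = phi e (Suc j) \<beta>' c'"
      have eq2: "phi e j \<beta> c - phi e j \<beta> c' = e (c' j - c j) * w"
        using eq ph[of c] ph[of c'] by (simp add: emb_diff[OF emb] algebra_simps)
      have cj: "c j = c' j"
      proof (rule ccontr)
        assume ne: "c j \<noteq> c' j"
        define s where "s = c' j - c j"
        have s0: "s \<noteq> 0" using ne by (simp add: s_def)
        define f where "f = (\<lambda>i. if i < j then inverse s * (c i - c' i) else 0)"
        have "phi e j \<beta> f = phi e j \<beta> (\<lambda>i. inverse s * (c i - c' i))"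
          by (rule phi_cong) (simp add: f_def)
        also have "\<dots> = e (inverse s) * (phi e j \<beta> c - phi e j \<beta> c')"
          by (simp add: phi_scale[OF emb] phi_diff[OF emb, symmetric])
        also have "\<dots> = e (inverse s) * e s * w" using eq2 by (simp add: s_def mult.assoc)
        also have "\<dots> = w" using s0 by (simp add: emb_mult[OF emb, symmetric] emb_1[OF emb])
        finally have "w = phi e j \<beta> f" by simp
        moreover have "f \<in> coords j" by (simp add: f_def coords_def)
        ultimately have "w \<in> I" by (simp add: I_def)
        then show False using w by simp
      qed
      have "phi e j \<beta> c = phi e j \<beta> c'" using eq2 cj by (simp add: emb_0[OF emb])
      moreover have "phi e j \<beta> c = phi e j \<beta> (c(j := 0))" "phi e j \<beta> c' = phi e j \<beta> (c'(j := 0))"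
        by (auto intro: phi_cong)
      moreover have "c(j := 0) \<in> coords j" "c'(j := 0) \<in> coords j"
        using c by (auto simp: coords_def)
      ultimately have "c(j := 0) = c'(j := 0)" using inj by (metis inj_onD)
      then show "c = c'" using cj by (metis fun_upd_triv fun_upd_upd)
    qed
    then show ?case using \<beta>'W by blast
  qed
  obtain \<beta> where \<beta>W: "\<forall>i. \<beta> i \<in> W" and inj: "inj_on (phi e k \<beta>) (coords k)" using main[of k] by auto
  have sub: "phi e k \<beta> ` coords k \<subseteq> W" using subsp_phi[OF W] \<beta>W by auto
  have "card (phi e k \<beta> ` coords k) = card W" using card_image[OF inj] card_coords cW by metis
  then have "phi e k \<beta> ` coords k = W" using sub by (intro card_subset_eq) auto
  then show ?thesis using \<beta>W inj by (auto simp: bij_betw_def)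
qed


lemma zero_case:
  assumes W: "subsp e W" and cW: "card W = card (UNIV::'a set) ^ k" and z: "\<forall>w\<in>W. Q w = 0"
  shows "\<exists>\<beta> r. r \<le> k \<and> (\<forall>i. \<beta> i \<in> W) \<and> bij_betw (phi e k \<beta>) (coords k) W \<and>
     (\<forall>i<k. \<forall>j<k. i \<noteq> j \<longrightarrow> B (\<beta> i) (\<beta> j) = 0) \<and> (\<forall>i<r. Q (\<beta> i) \<noteq> 0) \<and>
     (\<forall>i. r \<le> i \<and> i < k \<longrightarrow> Q (\<beta> i) = 0)"
proof -
  obtain \<beta> where \<beta>W: "\<forall>i. \<beta> i \<in> W" and bij: "bij_betw (phi e k \<beta>) (coords k) W"
    using basis_ex[OF W cW] by blast
  have "B (\<beta> i) (\<beta> j) = 0" for i j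
  proof -
    have "\<beta> i + \<beta> j \<in> W" using \<beta>W W by (simp add: subsp_def)
    then show ?thesis using z \<beta>W by (simp add: polar_def)
  qed
  then show ?thesis using \<beta>W bij z by (intro exI[of _ \<beta>] exI[of _ 0]) auto
qed

lemma shift_bij:
  "bij_betw (\<lambda>c. (c 0, \<lambda>i. c (Suc i))) (coords (Suc k) :: (nat \<Rightarrow> 'x::zero) set) (UNIV \<times> coords k)"
proof (rule bij_betw_byWitness[where f' = "\<lambda>(s, d). case_nat s d"])
  show "\<forall>a\<in>(coords (Suc k) :: (nat \<Rightarrow> 'x) set). (\<lambda>(s, d). case_nat s d) (a 0, \<lambda>i. a (Suc i)) = a"
    by (auto simp: fun_eq_iff split: nat.split)
  show "\<forall>a'\<in>UNIV \<times> (coords k :: (nat \<Rightarrow> 'x) set). ((\<lambda>(s, d). case_nat s d) a' 0, \<lambda>i. (\<lambda>(s, d). case_nat s d) a' (Suc i)) = a'"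
    by auto
  show "(\<lambda>c. (c 0, \<lambda>i. c (Suc i))) ` (coords (Suc k) :: (nat \<Rightarrow> 'x) set) \<subseteq> UNIV \<times> coords k"
    by (auto simp: coords_def)
  show "(\<lambda>(s, d). case_nat s d) ` (UNIV \<times> (coords k :: (nat \<Rightarrow> 'x) set)) \<subseteq> coords (Suc k)"
    by (auto simp: coords_def split: nat.split)
qed

lemma orth_ex:
  assumes "subsp e W" "card W = card (UNIV::'a set) ^ k"
  shows "\<exists>\<beta> r. r \<le> k \<and> (\<forall>i. \<beta> i \<in> W) \<and> bij_betw (phi e k \<beta>) (coords k) W \<and>
     (\<forall>i<k. \<forall>j<k. i \<noteq> j \<longrightarrow> B (\<beta> i) (\<beta> j) = 0) \<and> (\<forall>i<r. Q (\<beta> i) \<noteq> 0) \<and>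
     (\<forall>i. r \<le> i \<and> i < k \<longrightarrow> Q (\<beta> i) = 0)"
  using assms
proof (induction k arbitrary: W)
  case 0
  then have "W = {0}" by (metis One_nat_def card_1_singletonE power_0 singletonD subsp_def)
  then have "\<forall>w\<in>W. Q w = 0" by (simp add: Q0)
  then show ?case by (rule zero_case[OF 0(1,2)])
next
  case (Suc k)
  note W = Suc.prems(1) and cW = Suc.prems(2)
  show ?case
  proof (cases "\<forall>w\<in>W. Q w = 0")
    case True then show ?thesis by (rule zero_case[OF W cW])
  next
    case False
    then obtain v where v: "v \<in> W" "Q v \<noteq> 0" by blast
    define W' where "W' = {w \<in> W. B v w = 0}"
    have W'W: "W' \<subseteq> W" by (auto simp: W'_def)
    have sW': "subsp e W'"
      using W unfolding subsp_def W'_def by (auto simp: B_0_r B_add_r B_scale_r)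
    define g where "g = (\<lambda>(s, w'). e s * v + w')"
    define h where "h = (\<lambda>w. (B v w / Q v, w - e (B v w / Q v) * v))"
    have Bv: "B v (e s * v + w') = s * Q v" if "w' \<in> W'" for s w'
      using that by (simp add: B_add_r B_scale_r B_self W'_def)
    have gbij: "bij_betw g (UNIV \<times> W') W"
    proof (rule bij_betw_byWitness[where f' = h])
      show "\<forall>a\<in>UNIV \<times> W'. h (g a) = a"
        using Bv v(2) by (auto simp: g_def h_def)
      show "\<forall>a'\<in>W. g (h a') = a'" by (simp add: g_def h_def)
      show "g ` (UNIV \<times> W') \<subseteq> W"
        using W W'W v(1) unfolding g_def subsp_def by auto
      show "h ` W \<subseteq> UNIV \<times> W'"
      proof
        fix x assume "x \<in> h ` W"
        then obtain w where w: "w \<in> W" "x = h w" by blast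
        have "e (B v w / Q v) * v \<in> W" using W v(1) by (simp add: subsp_def)
        then have "w - e (B v w / Q v) * v \<in> W" using subsp_diff[OF emb W w(1)] by simp
        moreover have "B v (w - e (B v w / Q v) * v) = 0"
          using v(2) by (simp add: B_diff_r B_scale_r B_self)
        ultimately show "x \<in> UNIV \<times> W'" using w by (simp add: h_def W'_def)
      qed
    qed
    have "card W = card (UNIV::'a set) * card W'"
      using bij_betw_same_card[OF gbij] by (simp add: card_cartesian_product)
    then have cW': "card W' = card (UNIV::'a set) ^ k"
      using cW card_ge_2[where 'a='a] by simp
    obtain \<beta>' r' where r': "r' \<le> k" and \<beta>'W: "\<forall>i. \<beta>' i \<in> W'"
      and bij': "bij_betw (phi e k \<beta>') (coords k) W'"
      and orth': "\<forall>i<k. \<forall>j<k. i \<noteq> j \<longrightarrow> B (\<beta>' i) (\<beta>' j) = 0"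
      and nz': "\<forall>i<r'. Q (\<beta>' i) \<noteq> 0" and z': "\<forall>i. r' \<le> i \<and> i < k \<longrightarrow> Q (\<beta>' i) = 0"
      using Suc.IH[OF sW' cW'] by blast
    define \<beta> where "\<beta> = case_nat v \<beta>'"
    have \<beta>W: "\<forall>i. \<beta> i \<in> W" using v(1) \<beta>'W W'W by (auto simp: \<beta>_def split: nat.split)
    have eqf: "phi e (Suc k) \<beta> c = (g \<circ> map_prod id (phi e k \<beta>') \<circ> (\<lambda>c. (c 0, \<lambda>i. c (Suc i)))) c" for c
      by (simp add: phi_Suc_shift \<beta>_def g_def)
    have "bij_betw (g \<circ> map_prod id (phi e k \<beta>') \<circ> (\<lambda>c. (c 0, \<lambda>i. c (Suc i)))) (coords (Suc k)) W"
    proof (rule bij_betw_trans[OF shift_bij])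
      show "bij_betw (g \<circ> map_prod id (phi e k \<beta>')) (UNIV \<times> coords k) W"
        by (rule bij_betw_trans[OF bij_betw_map_prod[OF bij_betw_id bij'] gbij])
    qed
    then have bij: "bij_betw (phi e (Suc k) \<beta>) (coords (Suc k)) W"
      using bij_betw_cong[of "coords (Suc k)" "phi e (Suc k) \<beta>"] eqf by (metis (no_types, lifting))
    have orth: "\<forall>i<Suc k. \<forall>j<Suc k. i \<noteq> j \<longrightarrow> B (\<beta> i) (\<beta> j) = 0"
    proof (intro allI impI)
      fix i j assume ij: "i < Suc k" "j < Suc k" "i \<noteq> j"
      show "B (\<beta> i) (\<beta> j) = 0"
      proof (cases i)
        case 0
        then obtain j' where "j = Suc j'" using ij by (cases j) auto
        then show ?thesis using 0 \<beta>'W by (simp add: \<beta>_def W'_def)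
      next
        case (Suc i')
        show ?thesis
        proof (cases j)
          case 0 then show ?thesis using Suc \<beta>'W B_sym by (simp add: \<beta>_def W'_def)
        next
          case (Suc j') then show ?thesis using \<open>i = Suc i'\<close> ij orth' by (simp add: \<beta>_def)
        qed
      qed
    qed
    have nz: "\<forall>i<Suc r'. Q (\<beta> i) \<noteq> 0"
      using v(2) nz' by (auto simp: \<beta>_def less_Suc_eq_0_disj)
    have z: "\<forall>i. Suc r' \<le> i \<and> i < Suc k \<longrightarrow> Q (\<beta> i) = 0"
    proof (intro allI impI)
      fix i assume "Suc r' \<le> i \<and> i < Suc k"
      then obtain i' where "i = Suc i'" "r' \<le> i'" "i' < k" by (cases i) auto
      then show "Q (\<beta> i) = 0" using z' by (simp add: \<beta>_def)
    qed
    show ?thesis using r' \<beta>W bij orth nz z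
      by (intro exI[of _ \<beta>] exI[of _ "Suc r'"]) auto
  qed
qed

lemma diag_exists:
  assumes "card (UNIV :: 'b set) = card (UNIV :: 'a set) ^ n"
  shows "\<exists>\<beta> lam. diag_form e n Q (qf_rank n Q) \<beta> lam"
proof -
  have "subsp e (UNIV :: 'b set)" by (simp add: subsp_def)
  then obtain \<beta> r where r: "r \<le> n" and bij: "bij_betw (phi e n \<beta>) (coords n) UNIV"
      and orth: "\<forall>i<n. \<forall>j<n. i \<noteq> j \<longrightarrow> B (\<beta> i) (\<beta> j) = 0"
      and nz: "\<forall>i<r. Q (\<beta> i) \<noteq> 0" and z: "\<forall>i. r \<le> i \<and> i < n \<longrightarrow> Q (\<beta> i) = 0"
    using orth_ex[of UNIV n] assms by blast
  have Qc: "Q (phi e n \<beta> c) = (\<Sum>i<r. Q (\<beta> i) * (c i)^2)" for c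
  proof -
    have "Q (phi e n \<beta> c) = (\<Sum>i<n. Q (\<beta> i) * (c i)^2)"
      by (rule Q_phi_orth) (use orth in auto)
    also have "\<dots> = (\<Sum>i<r. Q (\<beta> i) * (c i)^2)"
      by (rule sum.mono_neutral_right) (use r z in auto)
    finally show ?thesis .
  qed
  have d: "diag_form e n Q r \<beta> (\<lambda>i. Q (\<beta> i))"
    unfolding diag_form_def using bij nz Qc by (simp add: is_basis_phi phi_def)
  then show ?thesis using diag_rank[OF d] by metis
qed

end



section \<open>Trace\<close>

lemma CHAR_emb:
  fixes e :: "'a::{finite,field} \<Rightarrow> 'c::field"
  assumes "is_emb e"
  shows "CHAR('c) = CHAR('a)"
proof (rule CHAR_eqI)
  have "e (of_nat CHAR('a)) = of_nat CHAR('a)" by (rule emb_of_nat[OF assms])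
  then show "of_nat CHAR('a) = (0::'c)" by (simp add: emb_0[OF assms])
next
  fix x assume "of_nat x = (0::'c)"
  then have "e (of_nat x) = e 0" using emb_of_nat[OF assms, of x] emb_0[OF assms] by simp
  then have "of_nat x = (0::'a)" using emb_inj[OF assms] by blast
  then show "CHAR('a) dvd x" by (simp add: of_nat_eq_0_iff_char_dvd)
qed

definition Tsum :: "nat \<Rightarrow> nat \<Rightarrow> 'c::field \<Rightarrow> 'c" where
  "Tsum q s y = (\<Sum>j<s. y ^ (q ^ j))"

locale trc =
  fixes e2 :: "'a::{finite,field} \<Rightarrow> 'c::{finite,field}" and m2 p m q :: nat
  assumes emb: "is_emb e2" and qdef: "q = card (UNIV::'a set)"
    and cardc: "card (UNIV::'c set) = q ^ m2"
    and m2: "m2 \<ge> 1" and p: "prime p" and carda: "q = p ^ m"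
begin

lemma q2: "q \<ge> 2" using card_ge_2[where 'a='a] qdef by simp

lemma powq: "(a::'a) ^ q = a" using ff_pow_card[of a] qdef by simp
lemma powqj: "(a::'a) ^ (q ^ j) = a" using ff_pow_card_pow[of a j] qdef by simp

lemma charc: "CHAR('c) = p"
  using CHAR_emb[OF emb] ff_CHAR[of p m] carda qdef p by simp

lemma frob_pow: "(x + y :: 'c) ^ (q ^ j) = x ^ (q ^ j) + y ^ (q ^ j)"
proof -
  have "q ^ j = CHAR('c) ^ (m * j)" using charc carda by (simp add: power_mult)
  then show ?thesis using charc p by (intro freshmans_dream') auto
qed

lemma frob_sum: "(\<Sum>i\<in>A. f i :: 'c) ^ (q ^ j) = (\<Sum>i\<in>A. f i ^ (q ^ j))"
proof -
  have "q ^ j = CHAR('c) ^ (m * j)" using charc carda by (simp add: power_mult)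
  then show ?thesis using charc p by (intro freshmans_dream_sum') auto
qed

lemma range_e2: "range e2 = {z. z ^ q = z}"
proof -
  have sub: "range e2 \<subseteq> {z. z ^ q = z}"
  proof
    fix z assume "z \<in> range e2"
    then obtain a where "z = e2 a" by blast
    then show "z \<in> {z. z ^ q = z}" using emb_power[OF emb, of a q] powq[of a] by simp
  qed
  define P :: "'c poly" where "P = monom 1 q - monom 1 1"
  have cP: "coeff P q = 1" using q2 by (simp add: P_def)
  then have P0: "P \<noteq> 0" by auto
  have dP: "degree P \<le> q" unfolding P_def
    apply (rule degree_diff_le)
     apply (simp add: degree_monom_le)
    using degree_monom_le[of "1::'c" 1] q2 by linarith
  have "{z. z ^ q = z} = {z. poly P z = 0}" by (simp add: P_def poly_monom)
  then have c1: "card {z::'c. z ^ q = z} \<le> q" using roots_bound[OF P0 dP] by simp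
  have "card (range e2) = q" using emb qdef unfolding is_emb_def by (simp add: card_image)
  then show ?thesis using sub c1 card_mono[OF _ sub] by (intro card_subset_eq) auto
qed

lemma Tsum_q: "Tsum q m2 (y::'c) ^ q = Tsum q m2 y"
proof -
  have "Tsum q m2 y ^ q = (\<Sum>j<m2. (y ^ (q ^ j)) ^ q)"
    unfolding Tsum_def using frob_sum[of "\<lambda>j. y ^ (q ^ j)" "{..<m2}" 1] by simp
  also have "\<dots> = (\<Sum>j<m2. y ^ (q ^ Suc j))"
  proof (intro sum.cong refl)
    fix j
    have "(y ^ (q ^ j)) ^ q = y ^ (q ^ j * q)" by (rule power_mult[symmetric])
    also have "q ^ j * q = q ^ Suc j" by (simp only: power_Suc2)
    finally show "(y ^ (q ^ j)) ^ q = y ^ (q ^ Suc j)" .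
  qed
  also have "\<dots> = (\<Sum>j<m2. y ^ (q ^ j))"
  proof -
    have "(\<Sum>j<Suc m2. y ^ (q ^ j)) = y ^ (q ^ 0) + (\<Sum>j<m2. y ^ (q ^ Suc j))"
      by (rule sum.lessThan_Suc_shift)
    moreover have "(\<Sum>j<Suc m2. y ^ (q ^ j)) = (\<Sum>j<m2. y ^ (q ^ j)) + y ^ (q ^ m2)" by simp
    moreover have "y ^ (q ^ m2) = y" using ff_pow_card[of y] cardc by simp
    ultimately show ?thesis by simp
  qed
  finally show ?thesis by (simp add: Tsum_def)
qed

lemma trace_eq: "e2 (trace e2 m2 (y::'c)) = Tsum q m2 y"
proof -
  have "Tsum q m2 y \<in> range e2" using range_e2 Tsum_q by auto
  then obtain a where a0: "Tsum q m2 y = e2 a" by (auto simp: image_iff)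
  then have a: "e2 a = Tsum q m2 y" by simp
  have uniq: "x = a" if "e2 x = Tsum q m2 y" for x
  proof -
    have "e2 x = e2 a" using a that by simp
    then show ?thesis using emb_inj[OF emb] by blast
  qed
  have "trace e2 m2 y = (THE a. e2 a = Tsum q m2 y)" by (simp add: trace_def Tsum_def qdef)
  also have "\<dots> = a" by (rule the_equality[where P = "\<lambda>a. e2 a = Tsum q m2 y", OF a uniq])
  finally have "trace e2 m2 y = a" .
  then show ?thesis using a by simp
qed

lemma trace_add: "trace e2 m2 ((y::'c) + y') = trace e2 m2 y + trace e2 m2 y'"
proof -
  have "e2 (trace e2 m2 (y + y')) = e2 (trace e2 m2 y + trace e2 m2 y')"
    by (simp add: trace_eq emb_add[OF emb] Tsum_def frob_pow sum.distrib)
  then show ?thesis using emb_inj[OF emb] by blast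
qed

lemma trace_scale: "trace e2 m2 (e2 s * (y::'c)) = s * trace e2 m2 y"
proof -
  have "e2 (trace e2 m2 (e2 s * y)) = e2 (s * trace e2 m2 y)"
  proof -
    have "(e2 s * y) ^ (q ^ j) = e2 s * y ^ (q ^ j)" for j
      using emb_power[OF emb, of s "q ^ j"] powqj[of s j] by (simp add: power_mult_distrib)
    then show ?thesis by (simp add: trace_eq emb_mult[OF emb] Tsum_def sum_distrib_left)
  qed
  then show ?thesis using emb_inj[OF emb] by blast
qed

lemma trace_0: "trace e2 m2 (0::'c) = 0"
  using trace_scale[of 0 0] emb_0[OF emb] by simp

lemma Tsum_nonzero: "\<exists>y::'c. Tsum q m2 y \<noteq> 0"
proof -
  define P :: "'c poly" where "P = (\<Sum>j<m2. monom 1 (q ^ j))"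
  have inj: "q ^ j = q ^ (m2 - 1) \<longleftrightarrow> j = m2 - 1" for j using q2 by (simp add: power_inject_exp)
  have "coeff P (q ^ (m2 - 1)) = (\<Sum>j<m2. if q ^ j = q ^ (m2 - 1) then 1 else 0)"
    by (simp add: P_def coeff_sum)
  also have "\<dots> = (\<Sum>j<m2. if j = m2 - 1 then 1 else 0)" by (simp only: inj)
  also have "\<dots> = 1" using m2 by simp
  finally have "coeff P (q ^ (m2 - 1)) = 1" .
  then have P0: "P \<noteq> 0" by auto
  have dP: "degree P \<le> q ^ (m2 - 1)" unfolding P_def
  proof (rule degree_sum_le)
    fix j assume "j \<in> {..<m2}"
    then have "q ^ j \<le> q ^ (m2 - 1)" using q2 by (intro power_increasing) auto
    then show "degree (monom (1::'c) (q ^ j)) \<le> q ^ (m2 - 1)" using degree_monom_le le_trans by blast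
  qed simp
  have "card {y. poly P y = 0} \<le> q ^ (m2 - 1)" by (rule roots_bound[OF P0 dP])
  also have "\<dots> < q ^ m2" using q2 m2 by (intro power_strict_increasing) auto
  finally have "{y. poly P y = 0} \<noteq> UNIV" using cardc by auto
  then obtain y where "poly P y \<noteq> 0" by auto
  moreover have "poly P y = Tsum q m2 y" by (simp add: P_def poly_sum poly_monom Tsum_def)
  ultimately show ?thesis by auto
qed

lemma trace_balanced:
  assumes b: "b \<noteq> 0"
  shows "card {y::'c. trace e2 m2 (b * y) = \<rho>} = q ^ (m2 - 1)"
proof -
  define L where "L = (\<lambda>y. trace e2 m2 (b * y))"
  obtain y0 :: 'c where "Tsum q m2 y0 \<noteq> 0" using Tsum_nonzero by blast
  then have s0: "trace e2 m2 y0 \<noteq> 0" using trace_eq[of y0] emb_0[OF emb] by auto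
  define y1 where "y1 = y0 / b"
  have L1: "L y1 = trace e2 m2 y0" using b by (simp add: L_def y1_def)
  have pre: "L (e2 (r / trace e2 m2 y0) * y1) = r" for r
  proof -
    have "L (e2 (r / trace e2 m2 y0) * y1) = trace e2 m2 (e2 (r / trace e2 m2 y0) * (b * y1))"
      by (simp add: L_def mult_ac)
    also have "\<dots> = r" using trace_scale L1 s0 by (simp add: L_def)
    finally show ?thesis .
  qed
  have Ladd: "L (y + y') = L y + L y'" for y y' by (simp add: L_def distrib_left trace_add)
  have fib: "card {y. L y = r} = card {y. L y = 0}" for r
  proof -
    define yr where "yr = e2 (r / trace e2 m2 y0) * y1"
    have "{y. L y = r} = (\<lambda>y. y + yr) ` {y. L y = 0}"
    proof (rule set_eqI, rule iffI)
      fix y assume "y \<in> {y. L y = r}"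
      then have "L (y - yr) = 0" using Ladd[of "y - yr" yr] pre yr_def by simp
      then show "y \<in> (\<lambda>y. y + yr) ` {y. L y = 0}" by (intro image_eqI[of _ _ "y - yr"]) auto
    next
      fix y assume "y \<in> (\<lambda>y. y + yr) ` {y. L y = 0}"
      then obtain z where "L z = 0" "y = z + yr" by blast
      then show "y \<in> {y. L y = r}" using Ladd pre yr_def by simp
    qed
    moreover have "inj (\<lambda>y::'c. y + yr)" by (simp add: inj_def)
    ultimately show ?thesis by (metis card_image inj_on_subset subset_UNIV)
  qed
  have "card (UNIV::'c set) = (\<Sum>r\<in>(UNIV::'a set). card {y. L y = r})"
    using sum.group[of "UNIV::'c set" "UNIV::'a set" L "\<lambda>_. 1::nat"] by simp
  also have "\<dots> = (\<Sum>r\<in>(UNIV::'a set). card {y. L y = 0})" by (intro sum.cong refl fib)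
  also have "\<dots> = q * card {y. L y = 0}" using qdef by simp
  finally have "q * card {y. L y = 0} = q * q ^ (m2 - 1)" using cardc m2
    by (metis Suc_diff_le diff_Suc_1 power_Suc)
  then have "card {y. L y = 0} = q ^ (m2 - 1)" using q2 by simp
  then show ?thesis using fib L_def by simp
qed

end



lemma parity_pm:
  assumes "odd p"
  shows "(-1::int) ^ ((p ^ m - 1) div 2) = (-1) ^ ((p - 1) div 2 * m)"
proof -
  obtain k where k: "p = 2 * k + 1" using assms oddE by blast
  define X where "X = (\<lambda>m. (p ^ m - 1) div 2)"
  have gen: "odd n \<Longrightarrow> n = 2 * ((n - 1) div 2) + 1" for n :: nat by presburger
  have pm: "p ^ m = 2 * X m + 1" for m
    unfolding X_def using assms by (intro gen) simp
  have XS: "X (Suc m) = p * X m + k" for m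
  proof -
    have "p ^ Suc m = 2 * (p * X m + k) + 1" using pm[of m] k by (simp add: algebra_simps)
    then show ?thesis using pm[of "Suc m"] by simp
  qed
  have mp: "(-1::int) ^ p = -1" using assms by simp
  have "(-1::int) ^ X m = (-1) ^ (k * m)"
  proof (induction m)
    case 0 then show ?case by (simp add: X_def)
  next
    case (Suc m)
    have "(-1::int) ^ X (Suc m) = (-1) ^ (p * X m) * (-1) ^ k" by (simp only: XS power_add)
    also have "(-1::int) ^ (p * X m) = ((-1) ^ p) ^ X m" by (simp only: power_mult)
    also have "\<dots> = (-1) ^ X m" by (simp only: mp)
    finally show ?case using Suc by (simp add: power_add)
  qed
  then show ?thesis using k by (simp add: X_def)
qed

locale codeloc =
  fixes p m m1 m2 M q :: nat
    and e1 :: "'a::{finite,field} \<Rightarrow> 'b::{finite,field}"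
    and e2 :: "'a \<Rightarrow> 'c::{finite,field}"
    and Q :: "'b \<Rightarrow> 'a"
  assumes p: "prime p" and oddp: "odd p" and m1': "m \<ge> 1"
    and qdef: "q = card (UNIV :: 'a set)" and qpm: "q = p ^ m"
    and m1: "m1 \<ge> 1" and m2: "m2 \<ge> 1" and Mdef: "M = m1 + m2"
    and e1: "is_emb e1" and card_b: "card (UNIV :: 'b set) = q ^ m1"
    and e2: "is_emb e2" and card_c: "card (UNIV :: 'c set) = q ^ m2"
    and qf: "is_qform e1 Q" and Qnz: "Q \<noteq> (\<lambda>_. 0)"
    and r1: "qf_rank m1 Q \<ge> 1"
begin

lemma oddq: "odd (card (UNIV :: 'a set))" using oddp qpm qdef by simp

lemma two: "(2::'a) \<noteq> 0" using ff_two_ne0[OF oddq] .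

sublocale Qf: qf e1 Q using e1 qf two by unfold_locales

sublocale Tr: trc e2 m2 p m q using e2 qdef card_c m2 p qpm by unfold_locales

lemma q3: "q \<ge> 3" using card_ge_3[OF oddq] qdef by simp

definition r where "r = qf_rank m1 Q"

lemma r_le: "r \<le> m1" by (simp add: r_def qf_rank_def)
lemma r_ge: "r \<ge> 1" using r1 by (simp add: r_def)

definition lamS where "lamS = snd (SOME (\<beta>, lam). diag_form e1 m1 Q r \<beta> lam)"

lemma some_pair:
  assumes "\<exists>a b. P a b"
  shows "P (fst (SOME (a, b). P a b)) (snd (SOME (a, b). P a b))"
proof -
  have eq: "(\<lambda>(a, b). P a b) = (\<lambda>x. P (fst x) (snd x))" by (simp add: fun_eq_iff split: prod.split)
  have "\<exists>x. P (fst x) (snd x)" using assms by auto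
  then have "P (fst (SOME x. P (fst x) (snd x))) (snd (SOME x. P (fst x) (snd x)))" by (rule someI_ex)
  then show ?thesis by (simp only: eq)
qed

lemma diag: "diag_form e1 m1 Q r (fst (SOME (\<beta>, lam). diag_form e1 m1 Q r \<beta> lam)) lamS"
proof -
  have "\<exists>\<beta> lam. diag_form e1 m1 Q r \<beta> lam" unfolding r_def
    by (rule Qf.diag_exists) (use card_b qdef in simp)
  then show ?thesis unfolding lamS_def by (rule some_pair)
qed

definition D where "D = (\<Prod>i<r. lamS i)"

lemma lam_nz: "i < r \<Longrightarrow> lamS i \<noteq> 0" using Qf.diag_lam[OF diag] .

lemma D_nz: "D \<noteq> 0" using lam_nz by (simp add: D_def)

lemma eta_D: "eta D = 1 \<or> eta D = -1" using D_nz by (auto simp: eta_def)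

lemma Delta: "qf_Delta e1 m1 Q = D"
  by (simp add: qf_Delta_def D_def lamS_def r_def Let_def)

definition eps where "eps = qf_eps p m e1 m1 Q"

lemma eps_def2: "eps = eta D * (-1) ^ (if even r then (p - 1) * m * r div 4 else (p - 1) * m * (r + 1) div 4)"
  by (simp add: eps_def qf_eps_def qf_varepsilon_def Delta r_def Let_def)

lemma eps_pm: "eps = 1 \<or> eps = -1"
  using eta_D unfolding eps_def2 by (cases "even (if even r then (p - 1) * m * r div 4 else (p - 1) * m * (r + 1) div 4)") auto

lemma eta_m1: "eta (-1::'a) = (-1) ^ ((p - 1) div 2 * m)"
  using eta_minus1[OF oddq] parity_pm[OF oddp, of m] qdef qpm by simp

lemma eta_1: "eta (1::'a) = 1" using eta_sq[of "1::'a"] by simp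

lemma eta_pow: "eta ((x::'a) ^ n) = eta x ^ n"
proof (induction n)
  case 0 then show ?case using eta_1 by simp
next
  case (Suc n) then show ?case by (simp add: eta_mult[OF oddq])
qed

lemma p_half: "p - 1 = 2 * ((p - 1) div 2)" using oddp by presburger

lemma eps_even:
  assumes "even r"
  shows "eps = eta ((-1) ^ (r div 2) * D)"
proof -
  define k where "k = (p - 1) div 2"
  obtain s where s: "r = 2 * s" using assms by blast
  have "(2 * k) * m * (2 * s) = (p - 1) * m * r" unfolding k_def by (simp only: p_half[symmetric] s)
  moreover have "(2 * k) * m * (2 * s) = 4 * (k * m * s)" by simp
  ultimately have eq4: "(p - 1) * m * r = 4 * (k * m * s)" by (rule subst)
  have "(p - 1) * m * r div 4 = k * m * s" by (simp only: eq4)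
  then have "eps = eta D * (-1) ^ (k * m * s)" using assms by (simp add: eps_def2)
  also have "\<dots> = eta D * ((-1) ^ (k * m)) ^ s" by (simp add: power_mult)
  also have "\<dots> = eta D * eta (-1::'a) ^ s" using eta_m1 k_def by simp
  also have "\<dots> = eta ((-1) ^ (r div 2) * D)" using s by (simp add: eta_mult[OF oddq] eta_pow)
  finally show ?thesis .
qed

lemma eps_odd:
  assumes "odd r"
  shows "eps = eta D * eta (-1::'a) ^ ((r + 1) div 2)"
proof -
  define k where "k = (p - 1) div 2"
  have "even (r + 1)" using assms by simp
  then obtain s where s: "r + 1 = 2 * s" by blast
  have "(2 * k) * m * (2 * s) = (p - 1) * m * (r + 1)" unfolding k_def by (simp only: p_half[symmetric] s)
  moreover have "(2 * k) * m * (2 * s) = 4 * (k * m * s)" by simp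
  ultimately have eq4: "(p - 1) * m * (r + 1) = 4 * (k * m * s)" by (rule subst)
  have "(p - 1) * m * (r + 1) div 4 = k * m * s" by (simp only: eq4)
  then have "eps = eta D * (-1) ^ (k * m * s)" using assms by (simp add: eps_def2)
  also have "\<dots> = eta D * ((-1) ^ (k * m)) ^ s" by (simp add: power_mult)
  also have "\<dots> = eta D * eta (-1::'a) ^ s" using eta_m1 k_def by simp
  finally show ?thesis using s by simp
qed


lemma card_UNIV_prod2: "card (UNIV :: ('x \<times> 'y) set) = card (UNIV :: 'x set) * card (UNIV :: 'y set)"
  by (metis UNIV_Times_UNIV card_cartesian_product)

lemma card_UNIV_b: "card (UNIV :: 'b set) = q ^ m1" by (rule card_b)

abbreviation cw where "cw a b \<equiv> codeword e2 m2 Q a b"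

definition F where "F a b z = a * Q (fst z) + trace e2 m2 (b * snd z)"

lemma F00: "F a b (0, 0) = 0"
  by (simp add: F_def Qf.Q0 Tr.trace_0)

lemma cw_F: "cw a b z = (if z \<in> Fstar then F a b z else 0)"
  by (simp add: codeword_def F_def)

definition cv where "cv a b w = card {z \<in> Fstar. cw a b z = w}"

lemma comp_vec_cw: "comp_vec (cw a b) = cv a b"
  by (simp add: comp_vec_def cv_def fun_eq_iff)

lemma card_Fstar: "card (Fstar :: ('b \<times> 'c) set) = q ^ M - 1"
proof -
  have "card (Fstar :: ('b \<times> 'c) set) = card (UNIV :: ('b \<times> 'c) set) - 1"
    by (simp add: Fstar_def card_Diff_singleton)
  also have "card (UNIV :: ('b \<times> 'c) set) = q ^ M"
    using card_b card_c by (simp add: card_UNIV_prod2 Mdef power_add)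
  finally show ?thesis .
qed

lemma cnt_full: "card {z :: 'b \<times> 'c. F a b z = w} = cv a b w + (if w = 0 then 1 else 0)"
proof -
  have "{z :: 'b \<times> 'c. F a b z = w} = {z \<in> Fstar. cw a b z = w} \<union> (if w = 0 then {(0, 0)} else {})"
    using F00[of a b] by (auto simp: cw_F Fstar_def)
  moreover have "{z \<in> Fstar. cw a b z = w} \<inter> (if w = 0 then {(0, 0)} else {}) = {}"
    by (auto simp: Fstar_def)
  ultimately have "card {z :: 'b \<times> 'c. F a b z = w} = card {z \<in> Fstar. cw a b z = w} + card (if w = 0 then {(0::'b, 0::'c)} else {})"
    by (simp add: card_Un_disjoint)
  then show ?thesis by (simp add: cv_def)
qed

lemma card_pairs2: "card {z :: 'x::finite \<times> 'y::finite. P (fst z) (snd z)} = (\<Sum>x\<in>UNIV. card {y. P x y})"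
proof -
  have "{z :: 'x \<times> 'y. P (fst z) (snd z)} = (SIGMA x:UNIV. {y. P x y})" by auto
  then show ?thesis by simp
qed

lemma cnt_b:
  assumes "b \<noteq> 0"
  shows "card {z :: 'b \<times> 'c. F a b z = w} = q ^ (M - 1)"
proof -
  have "card {z :: 'b \<times> 'c. F a b z = w} = (\<Sum>x\<in>(UNIV::'b set). card {y::'c. a * Q x + trace e2 m2 (b * y) = w})"
    using card_pairs2[of "\<lambda>x y. a * Q x + trace e2 m2 (b * y) = w"] by (simp add: F_def)
  also have "\<dots> = (\<Sum>x\<in>(UNIV::'b set). q ^ (m2 - 1))"
  proof (intro sum.cong refl)
    fix x :: 'b
    have "{y::'c. a * Q x + trace e2 m2 (b * y) = w} = {y. trace e2 m2 (b * y) = w - a * Q x}"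
      by (auto simp: algebra_simps)
    then show "card {y::'c. a * Q x + trace e2 m2 (b * y) = w} = q ^ (m2 - 1)"
      using Tr.trace_balanced[OF assms] by simp
  qed
  also have "\<dots> = q ^ m1 * q ^ (m2 - 1)" using card_b by simp
  also have "\<dots> = q ^ (M - 1)" using m2 Mdef by (simp add: power_add[symmetric])
  finally show ?thesis .
qed

lemma cnt_0: "card {z :: 'b \<times> 'c. F a 0 z = w} = q ^ m2 * card {x. a * Q x = w}"
proof -
  have "card {z :: 'b \<times> 'c. F a 0 z = w} = (\<Sum>x\<in>(UNIV::'b set). card {y::'c. a * Q x = w})"
    using card_pairs2[of "\<lambda>x y. a * Q x = w"] by (simp add: F_def Tr.trace_0)
  also have "\<dots> = (\<Sum>x\<in>(UNIV::'b set). if a * Q x = w then q ^ m2 else 0)"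
    using card_c by (intro sum.cong refl) auto
  also have "\<dots> = q ^ m2 * card {x. a * Q x = w}"
    by (simp add: sum.If_cases Int_def)
  finally show ?thesis .
qed

lemma cv_b:
  assumes "b \<noteq> 0"
  shows "cv a b w = (if w = 0 then q ^ (M - 1) - 1 else q ^ (M - 1))"
  using cnt_full[of a b w] cnt_b[OF assms, of a w] by auto

lemma cv_00: "cv 0 0 w = (if w = 0 then q ^ M - 1 else 0)"
proof -
  have "card {z :: 'b \<times> 'c. F 0 0 z = w} = (if w = 0 then q ^ M else 0)"
    using card_b card_c by (simp add: F_def Tr.trace_0 card_UNIV_prod2 Mdef power_add)
  then show ?thesis using cnt_full[of 0 0 w] by auto
qed

lemma cv_a0:
  assumes "a \<noteq> 0"
  shows "cv a 0 w + (if w = 0 then 1 else 0) = q ^ m2 * (q ^ (m1 - r) * dcount r lamS (w / a))"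
proof -
  have "{x. a * Q x = w} = {x. Q x = w / a}" using assms by (auto simp: field_simps)
  then have "card {x. a * Q x = w} = q ^ (m1 - r) * dcount r lamS (w / a)"
    using Qf.diag_count[OF diag, of "w / a"] qdef by simp
  then show ?thesis using cnt_full[of a 0 w] cnt_0[of a w] by simp
qed


lemma dform: "int (dcount r lamS t) =
    (if even r then int q^(r-1) + (if t = 0 then int q - 1 else -1) * int q^(r div 2 - 1) * eta ((-1)^(r div 2) * D)
     else int q^(r-1) + int q^((r-1) div 2) * eta ((-1)^((r-1) div 2) * t * D))"
  using dcount_formula[OF oddq, of r lamS t] lam_nz r_ge qdef by (simp add: D_def)

lemma cv_a0_real:
  assumes "a \<noteq> 0"
  shows "real (cv a 0 w) = real q ^ m2 * real q ^ (m1 - r) * real_of_int (int (dcount r lamS (w / a))) - (if w = 0 then 1 else 0)"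
proof -
  have "real (cv a 0 w + (if w = 0 then 1 else 0)) = real (q ^ m2 * (q ^ (m1 - r) * dcount r lamS (w / a)))"
    using cv_a0[OF assms, of w] by simp
  then show ?thesis by (simp split: if_splits)
qed

lemma G1: "real q ^ m2 * real q ^ (m1 - r) * real q ^ (r - 1) = real q ^ (M - 1)"
proof -
  have "m2 + (m1 - r) + (r - 1) = M - 1" using r_le r_ge Mdef by simp
  then show ?thesis by (metis power_add)
qed

lemma qpos: "real q > 0" using q3 by simp

lemma G_even:
  assumes "even r"
  shows "real q ^ m2 * real q ^ (m1 - r) * real q ^ (r div 2 - 1) = real q ^ (M - 1) * real q powr (- (real r / 2))"
proof -
  obtain s where s: "r = 2 * s" using assms by blast
  have s1: "s \<ge> 1" using s r_ge by simp
  have "real r / 2 = real s" using s by simp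
  then have pw: "real q powr (- (real r / 2)) = inverse (real q ^ s)"
    using qpos by (simp add: powr_minus powr_realpow)
  have "m2 + (m1 - r) + (s - 1) + s = M - 1" using r_le s s1 Mdef by simp
  then have h: "(real q ^ m2 * real q ^ (m1 - r) * real q ^ (s - 1)) * real q ^ s = real q ^ (M - 1)"
    by (metis power_add)
  have "real q ^ m2 * real q ^ (m1 - r) * real q ^ (s - 1) = real q ^ (M - 1) * inverse (real q ^ s)"
    using qpos by (simp only: h[symmetric]) (simp add: field_simps)
  then show ?thesis using pw s by simp
qed

lemma G_odd:
  assumes "odd r"
  shows "real q ^ m2 * real q ^ (m1 - r) * real q ^ ((r - 1) div 2) = real q ^ (M - 1) * real q powr ((1 - real r) / 2)"
proof -
  obtain s where s: "r = 2 * s + 1" using assms oddE by blast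
  have "(1 - real r) / 2 = - real s" using s by simp
  then have pw: "real q powr ((1 - real r) / 2) = inverse (real q ^ s)"
    using qpos by (simp add: powr_minus powr_realpow)
  have "m2 + (m1 - r) + s + s = M - 1" using r_le s Mdef by simp
  then have h: "(real q ^ m2 * real q ^ (m1 - r) * real q ^ s) * real q ^ s = real q ^ (M - 1)"
    by (metis power_add)
  have "real q ^ m2 * real q ^ (m1 - r) * real q ^ s = real q ^ (M - 1) * inverse (real q ^ s)"
    using qpos by (simp only: h[symmetric]) (simp add: field_simps)
  then show ?thesis using pw s by simp
qed

lemma cv_even0:
  assumes "even r" "a \<noteq> 0"
  shows "real (cv a 0 0) = real q ^ (M - 1) * (1 + real_of_int eps * real q powr (- (real r / 2)) * (real q - 1)) - 1"
proof -
  have "real (cv a 0 0) = real q ^ m2 * real q ^ (m1 - r) * (real q ^ (r - 1) + (real q - 1) * real q ^ (r div 2 - 1) * real_of_int eps) - 1"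
    using cv_a0_real[OF assms(2), of 0] dform[of 0] assms eps_even by simp
  also have "\<dots> = real q ^ m2 * real q ^ (m1 - r) * real q ^ (r - 1) + (real q ^ m2 * real q ^ (m1 - r) * real q ^ (r div 2 - 1)) * (real q - 1) * real_of_int eps - 1"
    by (simp add: algebra_simps)
  also have "\<dots> = real q ^ (M - 1) * (1 + real_of_int eps * real q powr (- (real r / 2)) * (real q - 1)) - 1"
    by (simp only: G1 G_even[OF assms(1)]) (simp add: algebra_simps)
  finally show ?thesis .
qed

lemma cv_evenw:
  assumes "even r" "a \<noteq> 0" "w \<noteq> 0"
  shows "real (cv a 0 w) = real q ^ (M - 1) * (1 - real_of_int eps * real q powr (- (real r / 2)))"
proof -
  have "w / a \<noteq> 0" using assms by simp
  then have "real (cv a 0 w) = real q ^ m2 * real q ^ (m1 - r) * (real q ^ (r - 1) - real q ^ (r div 2 - 1) * real_of_int eps)"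
    using cv_a0_real[OF assms(2), of w] dform[of "w / a"] assms eps_even by simp
  also have "\<dots> = real q ^ m2 * real q ^ (m1 - r) * real q ^ (r - 1) - (real q ^ m2 * real q ^ (m1 - r) * real q ^ (r div 2 - 1)) * real_of_int eps"
    by (simp add: algebra_simps)
  also have "\<dots> = real q ^ (M - 1) * (1 - real_of_int eps * real q powr (- (real r / 2)))"
    by (simp only: G1 G_even[OF assms(1)]) (simp add: algebra_simps)
  finally show ?thesis .
qed

lemma cv_odd0:
  assumes "odd r" "a \<noteq> 0"
  shows "cv a 0 0 = q ^ (M - 1) - 1"
proof -
  have "real (cv a 0 0) = real q ^ m2 * real q ^ (m1 - r) * real q ^ (r - 1) - 1"
    using cv_a0_real[OF assms(2), of 0] dform[of 0] assms by simp
  also have "\<dots> = real q ^ (M - 1) - 1" by (simp only: G1)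
  finally have "real (cv a 0 0) = real q ^ (M - 1) - 1" .
  moreover have "q ^ (M - 1) \<ge> 1" using q3 by simp
  ultimately have "real (cv a 0 0) = real (q ^ (M - 1) - 1)" by (simp add: of_nat_diff)
  then show ?thesis by (simp only: of_nat_eq_iff)
qed

lemma eta_odd_rel:
  assumes "odd r" "a \<noteq> 0"
  shows "eta ((-1)^((r-1) div 2) * (w / a) * D) = eta a * eps * eta (- w)"
proof -
  have em2: "eta (-1::'a) * eta (-1::'a) = 1" using eta_sqr[of "-1::'a"] by simp
  have "(r + 1) div 2 = Suc ((r - 1) div 2)" using assms r_ge by presburger
  then have epsx: "eps = eta D * eta (-1::'a) ^ ((r - 1) div 2) * eta (-1::'a)"
    using eps_odd[OF assms(1)] by (simp add: mult_ac)
  have "eta ((-1)^((r-1) div 2) * (w / a) * D) = eta (-1::'a) ^ ((r - 1) div 2) * (eta w * eta a) * eta D"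
    using eta_mult[OF oddq] eta_inverse[OF oddq] eta_pow by (simp add: divide_inverse)
  also have "\<dots> = eta a * (eta D * eta (-1::'a) ^ ((r - 1) div 2) * eta (-1::'a)) * (eta (-1::'a) * eta w)"
    using em2 by (simp add: algebra_simps)
  also have "\<dots> = eta a * eps * eta (- w)"
    using epsx eta_mult[OF oddq, of "-1" w] by simp
  finally show ?thesis .
qed

lemma cv_oddw:
  assumes "odd r" "a \<noteq> 0" "w \<noteq> 0"
  shows "real (cv a 0 w) = real q ^ (M - 1) * (1 + real_of_int (eta a) * (real_of_int eps * real q powr ((1 - real r) / 2) * real_of_int (eta (- w))))"
proof -
  have "w / a \<noteq> 0" using assms by simp
  then have "real (cv a 0 w) = real q ^ m2 * real q ^ (m1 - r) * (real q ^ (r - 1) + real q ^ ((r - 1) div 2) * real_of_int (eta a * eps * eta (- w)))"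
    using cv_a0_real[OF assms(2), of w] dform[of "w / a"] assms eta_odd_rel[OF assms(1,2), of w] by simp
  also have "\<dots> = real q ^ m2 * real q ^ (m1 - r) * real q ^ (r - 1) + (real q ^ m2 * real q ^ (m1 - r) * real q ^ ((r - 1) div 2)) * real_of_int (eta a * eps * eta (- w))"
    by (simp add: algebra_simps)
  also have "\<dots> = real q ^ (M - 1) * (1 + real_of_int (eta a) * (real_of_int eps * real q powr ((1 - real r) / 2) * real_of_int (eta (- w))))"
    by (simp only: G1 G_odd[OF assms(1)]) (simp add: algebra_simps)
  finally show ?thesis .
qed


lemma trace_diff: "trace e2 m2 ((y::'c) - y') = trace e2 m2 y - trace e2 m2 y'"
  using Tr.trace_add[of "y - y'" y'] by simp

lemma cw_add: "(\<lambda>z. cw a b z + cw a' b' z) = cw (a + a') (b + b')"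
  by (simp add: fun_eq_iff codeword_def algebra_simps Tr.trace_add)

lemma cw_diff: "(\<lambda>z. cw a b z - cw a' b' z) = cw (a - a') (b - b')"
  by (simp add: fun_eq_iff codeword_def algebra_simps trace_diff)

lemma cw_scale: "(\<lambda>z. s * cw a b z) = cw (s * a) (e2 s * b)"
  by (simp add: fun_eq_iff codeword_def mult.assoc Tr.trace_scale distrib_left)

lemma cw_zero: "cw 0 0 = (\<lambda>_. 0)"
  by (simp add: fun_eq_iff codeword_def Tr.trace_0)

lemma cw_zero_iff:
  assumes "cw a b = (\<lambda>_. 0)"
  shows "a = 0 \<and> b = 0"
proof -
  have b0: "b = 0"
  proof (rule ccontr)
    assume b: "b \<noteq> 0"
    have "card {y::'c. trace e2 m2 (b * y) = 1} = q ^ (m2 - 1)" by (rule Tr.trace_balanced[OF b])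
    moreover have "q ^ (m2 - 1) > 0" using q3 by simp
    ultimately obtain y :: 'c where y: "trace e2 m2 (b * y) = 1"
      by (metis (mono_tags, lifting) Collect_empty_eq card.empty less_irrefl)
    then have "y \<noteq> 0" using Tr.trace_0 by auto
    then have "(0::'b, y) \<in> Fstar" by (simp add: Fstar_def)
    then have "cw a b (0, y) = 1" using y by (simp add: codeword_def Qf.Q0)
    then show False using assms by (simp add: fun_eq_iff)
  qed
  have "a = 0"
  proof (rule ccontr)
    assume a: "a \<noteq> 0"
    obtain x where x: "Q x \<noteq> 0" using Qnz by auto
    then have "x \<noteq> 0" using Qf.Q0 by auto
    then have "(x, 0::'c) \<in> Fstar" by (simp add: Fstar_def)
    then have "cw a b (x, 0) = a * Q x" using b0 by (simp add: codeword_def Tr.trace_0)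
    then show False using assms a x by (simp add: fun_eq_iff)
  qed
  then show ?thesis using b0 by simp
qed

lemma cw_inj: "cw a b = cw a' b' \<longleftrightarrow> a = a' \<and> b = b'"
proof
  assume h: "cw a b = cw a' b'"
  have "cw (a - a') (b - b') = (\<lambda>_. 0)" using cw_diff[of a b a' b'] h by simp
  then show "a = a' \<and> b = b'" using cw_zero_iff[of "a - a'" "b - b'"] by simp
qed simp

definition cwp where "cwp = (\<lambda>(a, b). cw a b)"

lemma inj_cwp: "inj cwp"
  by (auto simp: inj_def cwp_def cw_inj)

lemma code_range: "code_CQ e2 m2 Q = range cwp"
  by (auto simp: code_CQ_def cwp_def)

lemma card_code: "card (code_CQ e2 m2 Q) = q ^ (m2 + 1)"
proof -
  have "card (code_CQ e2 m2 Q) = card (UNIV :: ('a \<times> 'c) set)"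
    using inj_cwp by (simp add: code_range card_image)
  also have "\<dots> = q ^ (m2 + 1)" using card_c qdef by (simp add: card_UNIV_prod2)
  finally show ?thesis .
qed

lemma linear_code: "is_linear_code (code_CQ e2 m2 Q)"
  unfolding is_linear_code_def code_CQ_def
proof (intro conjI ballI allI)
  have "(\<lambda>_. 0) = cw 0 0" using cw_zero by simp
  then show "(\<lambda>_. 0) \<in> {cw a b |a b. True}" by blast
next
  fix c c' assume "c \<in> {cw a b |a b. True}" "c' \<in> {cw a b |a b. True}"
  then obtain a b a' b' where cc: "c = cw a b" "c' = cw a' b'" by blast
  have "(\<lambda>z. c z + c' z) = cw (a + a') (b + b')" unfolding cc by (rule cw_add)
  then show "(\<lambda>z. c z + c' z) \<in> {cw a b |a b. True}" by blast
next
  fix s c assume "c \<in> {cw a b |a b. True}"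
  then obtain a b where cc: "c = cw a b" by blast
  have "(\<lambda>z. s * c z) = cw (s * a) (e2 s * b)" unfolding cc by (rule cw_scale)
  then show "(\<lambda>z. s * c z) \<in> {cw a b |a b. True}" by blast
qed

lemma card_code_pred: "card {c \<in> code_CQ e2 m2 Q. P c} = card {ab. P (cwp ab)}"
proof -
  have "{c \<in> code_CQ e2 m2 Q. P c} = cwp ` {ab. P (cwp ab)}" by (auto simp: code_range)
  then show ?thesis using inj_cwp by (simp add: card_image inj_on_subset)
qed

lemma hwt_cw: "hwt (cw a b) = q ^ M - 1 - cv a b 0"
proof -
  have "{z \<in> Fstar. cw a b z \<noteq> 0} = Fstar - {z \<in> Fstar. cw a b z = 0}" by auto
  then have "hwt (cw a b) = card (Fstar :: ('b \<times> 'c) set) - card {z \<in> Fstar. cw a b z = 0}"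
    by (simp add: hwt_def card_Diff_subset)
  then show ?thesis by (simp add: card_Fstar cv_def)
qed

lemma card_split:
  "card {ab :: 'a \<times> 'c. R ab} = (if R (0, 0) then 1 else 0) + card {ab. snd ab \<noteq> 0 \<and> R ab} + card {a. a \<noteq> 0 \<and> R (a, 0)}"
proof -
  have "{ab :: 'a \<times> 'c. R ab} = ({ab. ab = (0, 0) \<and> R ab} \<union> {ab. snd ab \<noteq> 0 \<and> R ab}) \<union> (\<lambda>a. (a, 0)) ` {a. a \<noteq> 0 \<and> R (a, 0)}"
    by (auto simp: image_iff)
  moreover have "card ({ab :: 'a \<times> 'c. ab = (0, 0) \<and> R ab} \<union> {ab. snd ab \<noteq> 0 \<and> R ab}) = card {ab :: 'a \<times> 'c. ab = (0, 0) \<and> R ab} + card {ab :: 'a \<times> 'c. snd ab \<noteq> 0 \<and> R ab}"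
    by (rule card_Un_disjoint) auto
  moreover have "card ((\<lambda>a. (a, 0::'c)) ` {a. a \<noteq> 0 \<and> R (a, 0)}) = card {a. a \<noteq> 0 \<and> R (a, 0)}"
    by (rule card_image) (auto simp: inj_on_def)
  moreover have "({ab :: 'a \<times> 'c. ab = (0, 0) \<and> R ab} \<union> {ab. snd ab \<noteq> 0 \<and> R ab}) \<inter> (\<lambda>a. (a, 0)) ` {a. a \<noteq> 0 \<and> R (a, 0)} = {}"
    by auto
  moreover have "{ab :: 'a \<times> 'c. ab = (0, 0) \<and> R ab} = (if R (0, 0) then {(0, 0)} else {})" by auto
  ultimately show ?thesis by (simp add: card_Un_disjoint)
qed

lemma card_A1: "card {ab :: 'a \<times> 'c. snd ab \<noteq> 0} = q * (q ^ m2 - 1)"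
proof -
  have "{ab :: 'a \<times> 'c. snd ab \<noteq> 0} = UNIV \<times> (UNIV - {0})" by auto
  then show ?thesis using card_c qdef by (simp add: card_cartesian_product card_Diff_singleton)
qed

lemma card_A1_pred:
  assumes "\<And>a b. b \<noteq> 0 \<Longrightarrow> R (a, b) = R0"
  shows "card {ab :: 'a \<times> 'c. snd ab \<noteq> 0 \<and> R ab} = (if R0 then q * (q ^ m2 - 1) else 0)"
proof -
  have "{ab :: 'a \<times> 'c. snd ab \<noteq> 0 \<and> R ab} = (if R0 then {ab. snd ab \<noteq> 0} else {})"
    using assms by (auto simp: prod.case_eq_if)
  then show ?thesis using card_A1 by simp
qed

lemma card_nz: "card {a :: 'a. a \<noteq> 0} = q - 1"
proof -
  have "{a :: 'a. a \<noteq> 0} = UNIV - {0}" by auto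
  then show ?thesis using qdef by (simp add: card_Diff_singleton)
qed


end



context codeloc
begin

definition k0 :: "'a \<Rightarrow> nat" where "k0 = (\<lambda>w. if w = 0 then q ^ M - 1 else 0)"
definition k1 :: "'a \<Rightarrow> nat" where "k1 = (\<lambda>w. if w = 0 then q ^ (M - 1) - 1 else q ^ (M - 1))"

lemma cv00: "cv 0 0 = k0" by (simp add: fun_eq_iff cv_00 k0_def)
lemma cvb: "b \<noteq> 0 \<Longrightarrow> cv a b = k1" by (simp add: fun_eq_iff cv_b k1_def)

lemma comp_count:
  "card {c \<in> code_CQ e2 m2 Q. comp_vec c = k} =
     (if k = k0 then 1 else 0) + (if k = k1 then q * (q ^ m2 - 1) else 0) + card {a. a \<noteq> 0 \<and> cv a 0 = k}"
proof -
  have "card {c \<in> code_CQ e2 m2 Q. comp_vec c = k} = card {ab. cv (fst ab) (snd ab) = k}"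
    by (simp add: card_code_pred cwp_def comp_vec_cw case_prod_beta)
  also have "\<dots> = (if cv 0 0 = k then 1 else 0) + card {ab :: 'a \<times> 'c. snd ab \<noteq> 0 \<and> cv (fst ab) (snd ab) = k} + card {a. a \<noteq> 0 \<and> cv a 0 = k}"
    using card_split[of "\<lambda>ab. cv (fst ab) (snd ab) = k"] by (simp only: fst_conv snd_conv)
  also have "card {ab :: 'a \<times> 'c. snd ab \<noteq> 0 \<and> cv (fst ab) (snd ab) = k} = (if k1 = k then q * (q ^ m2 - 1) else 0)"
    by (rule card_A1_pred) (simp add: cvb)
  also have "(cv 0 0 = k) = (k = k0)" using cv00 by auto
  also have "(k1 = k) = (k = k1)" by auto
  finally show ?thesis .
qed

lemma cv_le: "cv a b w \<le> q ^ M - 1"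
proof -
  have "cv a b w \<le> card (Fstar :: ('b \<times> 'c) set)" unfolding cv_def by (rule card_mono) auto
  then show ?thesis using card_Fstar by simp
qed

lemma hw_b:
  assumes "b \<noteq> 0"
  shows "q ^ M - 1 - cv a b 0 = q ^ M - q ^ (M - 1)"
proof -
  have "1 \<le> q ^ (M - 1)" using q3 by simp
  moreover have "q ^ (M - 1) \<le> q ^ M" using q3 by (intro power_increasing) auto
  moreover have "cv a b 0 = q ^ (M - 1) - 1" using cv_b[OF assms, of a 0] by simp
  ultimately show ?thesis by linarith
qed

lemma weight_count:
  "card {c \<in> code_CQ e2 m2 Q. hwt c = w} =
     (if w = 0 then 1 else 0) + (if w = q ^ M - q ^ (M - 1) then q * (q ^ m2 - 1) else 0) + card {a. a \<noteq> 0 \<and> q ^ M - 1 - cv a 0 0 = w}"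
proof -
  have "card {c \<in> code_CQ e2 m2 Q. hwt c = w} = card {ab. q ^ M - 1 - cv (fst ab) (snd ab) 0 = w}"
    by (simp add: card_code_pred cwp_def hwt_cw case_prod_beta)
  also have "\<dots> = (if q ^ M - 1 - cv 0 0 0 = w then 1 else 0) + card {ab :: 'a \<times> 'c. snd ab \<noteq> 0 \<and> q ^ M - 1 - cv (fst ab) (snd ab) 0 = w} + card {a. a \<noteq> 0 \<and> q ^ M - 1 - cv a 0 0 = w}"
    using card_split[of "\<lambda>ab. q ^ M - 1 - cv (fst ab) (snd ab) 0 = w"] by (simp only: fst_conv snd_conv)
  also have "card {ab :: 'a \<times> 'c. snd ab \<noteq> 0 \<and> q ^ M - 1 - cv (fst ab) (snd ab) 0 = w} = (if q ^ M - q ^ (M - 1) = w then q * (q ^ m2 - 1) else 0)"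
  proof (rule card_A1_pred)
    fix a :: 'a and b :: 'c assume "b \<noteq> 0"
    then show "(q ^ M - 1 - cv (fst (a, b)) (snd (a, b)) 0 = w) = (q ^ M - q ^ (M - 1) = w)"
      by (simp only: fst_conv snd_conv hw_b[OF \<open>b \<noteq> 0\<close>])
  qed
  also have "(q ^ M - 1 - cv 0 0 0 = w) = (w = 0)" by (auto simp: cv_00)
  also have "(q ^ M - q ^ (M - 1) = w) = (w = q ^ M - q ^ (M - 1))" by auto
  finally show ?thesis .
qed

lemma W1_eq: "q ^ M - q ^ (M - 1) = q ^ (M - 1) * (q - 1)"
proof -
  have "M = Suc (M - 1)" using Mdef m1 by simp
  then have "q ^ M = q ^ (M - 1) * q" by (metis power_Suc2)
  then show ?thesis by (simp add: diff_mult_distrib2)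
qed

lemma W1_pos: "q ^ (M - 1) * (q - 1) > 0" using q3 by simp



abbreviation tt where "tt \<equiv> real q powr (- (real r / 2))"

lemma tt_bounds:
  assumes "even r"
  shows "tt > 0 \<and> tt < 1"
proof -
  obtain s where s: "r = 2 * s" using assms by blast
  have s1: "s \<ge> 1" using s r_ge by simp
  have "real r / 2 = real s" using s by simp
  then have pw: "tt = inverse (real q ^ s)" using qpos by (simp add: powr_minus powr_realpow)
  have q3r: "real q \<ge> 3" using q3 by simp
  have "real q ^ s \<ge> real q ^ 1" using q3r s1 by (intro power_increasing) auto
  then have "real q ^ s > 1" using q3r by (simp only: power_one_right)
  then show ?thesis using pw q3 by (simp add: inverse_less_1_iff)
qed

definition A0 where "A0 = real q ^ (M - 1) * (1 + real_of_int eps * tt * (real q - 1)) - 1"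
definition Aw where "Aw = real q ^ (M - 1) * (1 - real_of_int eps * tt)"

lemma even_cv_iff:
  assumes "even r" "a \<noteq> 0"
  shows "cv a 0 = k \<longleftrightarrow> (real (k 0) = A0 \<and> (\<forall>w. w \<noteq> 0 \<longrightarrow> real (k w) = Aw))"
proof
  assume "cv a 0 = k"
  then show "real (k 0) = A0 \<and> (\<forall>w. w \<noteq> 0 \<longrightarrow> real (k w) = Aw)"
    using cv_even0[OF assms] cv_evenw[OF assms] by (auto simp: A0_def Aw_def)
next
  assume h: "real (k 0) = A0 \<and> (\<forall>w. w \<noteq> 0 \<longrightarrow> real (k w) = Aw)"
  show "cv a 0 = k"
  proof
    fix w
    show "cv a 0 w = k w"
    proof (cases "w = 0")
      case True
      then have "real (cv a 0 w) = real (k w)" using h cv_even0[OF assms] by (simp add: A0_def)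
      then show ?thesis by (simp only: of_nat_eq_iff)
    next
      case False
      then have "real (cv a 0 w) = real (k w)" using h cv_evenw[OF assms False] by (simp add: Aw_def)
      then show ?thesis by (simp only: of_nat_eq_iff)
    qed
  qed
qed

lemma even_comp_nz:
  assumes "even r"
  shows "card {a. a \<noteq> 0 \<and> cv a 0 = k} = (if real (k 0) = A0 \<and> (\<forall>w. w \<noteq> 0 \<longrightarrow> real (k w) = Aw) then q - 1 else 0)"
proof (cases "real (k 0) = A0 \<and> (\<forall>w. w \<noteq> 0 \<longrightarrow> real (k w) = Aw)")
  case True
  then have "{a. a \<noteq> 0 \<and> cv a 0 = k} = {a. a \<noteq> 0}" using even_cv_iff[OF assms] by blast
  then show ?thesis using card_nz by (subst if_P[OF True]) simp
next
  case False
  then have "{a. a \<noteq> 0 \<and> cv a 0 = k} = {}" using even_cv_iff[OF assms] by blast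
  then show ?thesis by (subst if_not_P[OF False]) simp
qed

definition W2 where "W2 = q ^ M - 1 - cv 1 0 0"

lemma W2_real:
  assumes "even r"
  shows "real W2 = real q ^ (M - 1) * (real q - 1) * (1 - real_of_int eps * tt)"
proof -
  have le: "cv 1 0 0 \<le> q ^ M - 1" by (rule cv_le)
  have "q ^ M \<ge> 1" using q3 by simp
  then have "real W2 = real q ^ M - 1 - real (cv 1 0 0)" using le by (simp add: W2_def of_nat_diff)
  also have "real q ^ M = real q ^ (M - 1) * real q"
  proof -
    have "M = Suc (M - 1)" using Mdef m1 by simp
    then show ?thesis by (metis power_Suc2)
  qed
  also have "real (cv 1 0 0) = real q ^ (M - 1) * (1 + real_of_int eps * tt * (real q - 1)) - 1"
    using cv_even0[OF assms, of 1] by simp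
  finally show ?thesis by (simp add: algebra_simps)
qed

lemma even_weight_nz:
  assumes "even r"
  shows "card {a. a \<noteq> 0 \<and> q ^ M - 1 - cv a 0 0 = w} = (if w = W2 then q - 1 else 0)"
proof -
  have ca: "a \<noteq> 0 \<longrightarrow> cv a 0 0 = cv 1 0 0" for a
  proof
    assume a: "a \<noteq> 0"
    have "real (cv a 0 0) = real (cv 1 0 0)" using cv_even0[OF assms a] cv_even0[OF assms, of 1] by simp
    then show "cv a 0 0 = cv 1 0 0" by (simp only: of_nat_eq_iff)
  qed
  show ?thesis
  proof (cases "w = W2")
    case True
    have "{a. a \<noteq> 0 \<and> q ^ M - 1 - cv a 0 0 = w} = {a. a \<noteq> 0}"
    proof (rule Collect_cong)
      fix a show "(a \<noteq> 0 \<and> q ^ M - 1 - cv a 0 0 = w) = (a \<noteq> 0)"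
        using ca[of a] True unfolding W2_def by auto
    qed
    then show ?thesis using card_nz by (subst if_P[OF True]) simp
  next
    case False
    have "{a. a \<noteq> 0 \<and> q ^ M - 1 - cv a 0 0 = w} = {}"
    proof -
      have "\<not> (a \<noteq> 0 \<and> q ^ M - 1 - cv a 0 0 = w)" for a
        using ca[of a] False unfolding W2_def by auto
      then show ?thesis by blast
    qed
    then show ?thesis by (subst if_not_P[OF False]) simp
  qed
qed

lemma even_weights:
  assumes "even r"
  shows "card {c \<in> code_CQ e2 m2 Q. hwt c = w} =
         (if w = 0 then 1
          else if w = q ^ (M - 1) * (q - 1) then q * (q ^ m2 - 1)
          else if real w = real q ^ (M - 1) * (real q - 1) * (1 - real_of_int eps * tt)
            then q - 1
          else 0)"
proof -
  have tb: "tt > 0" "tt < 1" using tt_bounds[OF assms] by auto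
  have W2r: "real W2 = real q ^ (M - 1) * (real q - 1) * (1 - real_of_int eps * tt)" by (rule W2_real[OF assms])
  have qM: "real q ^ (M - 1) > 0" "real q - 1 > 0" using q3 by auto
  have W2pos: "W2 \<noteq> 0"
  proof -
    have ttp: "tt > 0" using qpos by simp
    have "real_of_int eps * tt < 1"
    proof (cases "eps = 1")
      case True then show ?thesis using tb(2) by simp
    next
      case False then have "eps = -1" using eps_pm by simp
      then have "real_of_int eps * tt = - tt" by simp
      then show ?thesis using ttp by linarith
    qed
    then have "real W2 > 0" using W2r qM by simp
    then show ?thesis by simp
  qed
  have W21: "W2 \<noteq> q ^ (M - 1) * (q - 1)"
  proof
    assume "W2 = q ^ (M - 1) * (q - 1)"
    then have "real W2 = real q ^ (M - 1) * (real q - 1)" using q3 by (simp add: of_nat_diff)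
    then have "real q ^ (M - 1) * (real q - 1) * (real_of_int eps * tt) = 0" using W2r by (simp add: algebra_simps)
    then show False using qM tb eps_pm by auto
  qed
  have eqw: "(real w = real q ^ (M - 1) * (real q - 1) * (1 - real_of_int eps * tt)) = (w = W2)"
    unfolding W2r[symmetric] by (rule of_nat_eq_iff)
  show ?thesis
    unfolding weight_count even_weight_nz[OF assms] W1_eq eqw
    using W2pos W21 W1_pos by auto
qed

lemma real_if0: "real (if P then x else 0) = real x * (if P then 1 else 0)" by simp
lemma real_if1: "real (if P then 1 else 0) = (if P then 1 else 0)" by simp

lemma even_comp:
  assumes "even r"
  shows "real (card {c \<in> code_CQ e2 m2 Q. comp_vec c = k}) =
           (if k = (\<lambda>w. if w = 0 then q ^ M - 1 else 0) then 1 else 0)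
         + real (q * (q ^ m2 - 1)) * (if k = (\<lambda>w. if w = 0 then q ^ (M - 1) - 1 else q ^ (M - 1)) then 1 else 0)
         + real (q - 1) *
             (if real (k 0) = real q ^ (M - 1) * (1 + real_of_int eps * tt * (real q - 1)) - 1
                 \<and> (\<forall>w. w \<noteq> 0 \<longrightarrow> real (k w) = real q ^ (M - 1) * (1 - real_of_int eps * tt))
              then 1 else 0)"
proof -
  have "card {c \<in> code_CQ e2 m2 Q. comp_vec c = k} = (if k = k0 then 1 else 0) + (if k = k1 then q * (q ^ m2 - 1) else 0)
      + (if real (k 0) = A0 \<and> (\<forall>w. w \<noteq> 0 \<longrightarrow> real (k w) = Aw) then q - 1 else 0)"
    by (simp only: comp_count even_comp_nz[OF assms])
  then have "real (card {c \<in> code_CQ e2 m2 Q. comp_vec c = k}) = (if k = k0 then 1 else 0) + real (q * (q ^ m2 - 1)) * (if k = k1 then 1 else 0)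
      + real (q - 1) * (if real (k 0) = A0 \<and> (\<forall>w. w \<noteq> 0 \<longrightarrow> real (k w) = Aw) then 1 else 0)"
    by (simp only: of_nat_add real_if0 real_if1)
  then show ?thesis by (simp only: k0_def k1_def A0_def Aw_def)
qed


lemma card_sq: "card (sqset :: 'a set) = (q - 1) div 2"
  using card_sqset[OF oddq] qdef by simp

lemma card_nsq: "card (nsqset :: 'a set) = (q - 1) div 2"
proof -
  have "sqset \<union> nsqset = UNIV - {0::'a}" by (auto simp: sqset_def nsqset_def)
  moreover have "sqset \<inter> nsqset = ({}::'a set)" by (auto simp: sqset_def nsqset_def)
  ultimately have "card (sqset::'a set) + card (nsqset::'a set) = q - 1"
    using qdef by (metis card_Diff_singleton card_Un_disjoint finite iso_tuple_UNIV_I)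
  then show ?thesis using card_sqset[OF oddq] qdef by simp
qed

lemma eta_sq_iff: "a \<in> sqset \<longleftrightarrow> eta a = 1" by (auto simp: sqset_def eta_def)
lemma eta_nsq_iff: "a \<in> nsqset \<longleftrightarrow> eta a = -1" by (auto simp: nsqset_def eta_def)

abbreviation ss where "ss \<equiv> real q powr ((1 - real r) / 2)"

definition Pp :: "('a \<Rightarrow> nat) \<Rightarrow> bool" where
  "Pp k \<longleftrightarrow> k 0 = q ^ (M - 1) - 1 \<and> (\<forall>w. w \<noteq> 0 \<longrightarrow> real (k w) = real q ^ (M - 1) *
                        (1 + real_of_int eps * ss * real_of_int (eta (- w))))"
definition Pm :: "('a \<Rightarrow> nat) \<Rightarrow> bool" where
  "Pm k \<longleftrightarrow> k 0 = q ^ (M - 1) - 1 \<and> (\<forall>w. w \<noteq> 0 \<longrightarrow> real (k w) = real q ^ (M - 1) *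
                        (1 - real_of_int eps * ss * real_of_int (eta (- w))))"

lemma odd_cv_iff:
  assumes "odd r" "a \<noteq> 0"
  shows "cv a 0 = k \<longleftrightarrow> (k 0 = q ^ (M - 1) - 1 \<and> (\<forall>w. w \<noteq> 0 \<longrightarrow> real (k w) = real q ^ (M - 1) *
                        (1 + real_of_int (eta a) * (real_of_int eps * ss * real_of_int (eta (- w))))))"
proof
  assume "cv a 0 = k"
  then show "k 0 = q ^ (M - 1) - 1 \<and> (\<forall>w. w \<noteq> 0 \<longrightarrow> real (k w) = real q ^ (M - 1) *
                        (1 + real_of_int (eta a) * (real_of_int eps * ss * real_of_int (eta (- w)))))"
    using cv_odd0[OF assms] cv_oddw[OF assms] by auto
next
  assume h: "k 0 = q ^ (M - 1) - 1 \<and> (\<forall>w. w \<noteq> 0 \<longrightarrow> real (k w) = real q ^ (M - 1) *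
                        (1 + real_of_int (eta a) * (real_of_int eps * ss * real_of_int (eta (- w)))))"
  show "cv a 0 = k"
  proof
    fix w
    show "cv a 0 w = k w"
    proof (cases "w = 0")
      case True
      then show ?thesis using h cv_odd0[OF assms] by simp
    next
      case False
      then have "real (cv a 0 w) = real (k w)" using h cv_oddw[OF assms False] by simp
      then show ?thesis by (simp only: of_nat_eq_iff)
    qed
  qed
qed

lemma odd_cv_sq:
  assumes "odd r" "a \<in> sqset"
  shows "cv a 0 = k \<longleftrightarrow> Pp k"
proof -
  have "a \<noteq> 0" "eta a = 1" using assms(2) eta_sq_iff by (auto simp: sqset_def)
  then show ?thesis using odd_cv_iff[OF assms(1)] by (simp add: Pp_def)
qed

lemma odd_cv_nsq:
  assumes "odd r" "a \<in> nsqset"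
  shows "cv a 0 = k \<longleftrightarrow> Pm k"
proof -
  have "a \<noteq> 0" "eta a = -1" using assms(2) eta_nsq_iff by (auto simp: nsqset_def)
  then show ?thesis using odd_cv_iff[OF assms(1)] by (simp add: Pm_def)
qed

lemma odd_comp_nz:
  assumes "odd r"
  shows "card {a. a \<noteq> 0 \<and> cv a 0 = k} = (if Pp k then (q - 1) div 2 else 0) + (if Pm k then (q - 1) div 2 else 0)"
proof -
  have "{a. a \<noteq> 0 \<and> cv a 0 = k} = {a \<in> sqset. Pp k} \<union> {a \<in> nsqset. Pm k}"
  proof (rule set_eqI)
    fix a :: 'a
    show "a \<in> {a. a \<noteq> 0 \<and> cv a 0 = k} \<longleftrightarrow> a \<in> {a \<in> sqset. Pp k} \<union> {a \<in> nsqset. Pm k}"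
    proof (cases "a = 0")
      case True then show ?thesis by (simp add: sqset_def nsqset_def)
    next
      case False
      then have "a \<in> sqset \<or> a \<in> nsqset" by (auto simp: sqset_def nsqset_def)
      moreover have "\<not> (a \<in> sqset \<and> a \<in> nsqset)" by (auto simp: sqset_def nsqset_def)
      ultimately show ?thesis using False odd_cv_sq[OF assms, of a k] odd_cv_nsq[OF assms, of a k] by blast
    qed
  qed
  moreover have d: "{a \<in> sqset. Pp k} \<inter> {a \<in> nsqset. Pm k} = {}" by (auto simp: sqset_def nsqset_def)
  have "card ({a \<in> (sqset::'a set). Pp k} \<union> {a \<in> (nsqset::'a set). Pm k}) = card {a \<in> (sqset::'a set). Pp k} + card {a \<in> (nsqset::'a set). Pm k}"
    by (rule card_Un_disjoint[OF _ _ d]) simp_all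
  ultimately have "card {a. a \<noteq> 0 \<and> cv a 0 = k} = card {a \<in> (sqset::'a set). Pp k} + card {a \<in> (nsqset::'a set). Pm k}"
    by simp
  moreover have "card {a \<in> (sqset::'a set). Pp k} = (if Pp k then (q - 1) div 2 else 0)"
    using card_sq by (cases "Pp k") simp_all
  moreover have "card {a \<in> (nsqset::'a set). Pm k} = (if Pm k then (q - 1) div 2 else 0)"
    using card_nsq by (cases "Pm k") simp_all
  ultimately show ?thesis by simp
qed

lemma half_real: "real ((q - 1) div 2) = (real q - 1) / 2"
proof -
  have "odd q" using oddq qdef by simp
  then have "q - 1 = 2 * ((q - 1) div 2)" by presburger
  then have "real (q - 1) = 2 * real ((q - 1) div 2)" by (metis of_nat_mult of_nat_numeral)
  moreover have "real (q - 1) = real q - 1" using q3 by (simp add: of_nat_diff)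
  ultimately show ?thesis by simp
qed

lemma odd_comp:
  assumes "odd r"
  shows "real (card {c \<in> code_CQ e2 m2 Q. comp_vec c = k}) =
           (if k = (\<lambda>w. if w = 0 then q ^ M - 1 else 0) then 1 else 0)
         + real (q * (q ^ m2 - 1)) * (if k = (\<lambda>w. if w = 0 then q ^ (M - 1) - 1 else q ^ (M - 1)) then 1 else 0)
         + (real q - 1) / 2 *
             (if k 0 = q ^ (M - 1) - 1
                 \<and> (\<forall>w. w \<noteq> 0 \<longrightarrow> real (k w) = real q ^ (M - 1) *
                        (1 + real_of_int eps * ss * real_of_int (eta (- w))))
              then 1 else 0)
         + (real q - 1) / 2 *
             (if k 0 = q ^ (M - 1) - 1
                 \<and> (\<forall>w. w \<noteq> 0 \<longrightarrow> real (k w) = real q ^ (M - 1) *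
                        (1 - real_of_int eps * ss * real_of_int (eta (- w))))
              then 1 else 0)"
proof -
  have "card {c \<in> code_CQ e2 m2 Q. comp_vec c = k} = (if k = k0 then 1 else 0) + (if k = k1 then q * (q ^ m2 - 1) else 0)
      + ((if Pp k then (q - 1) div 2 else 0) + (if Pm k then (q - 1) div 2 else 0))"
    by (simp only: comp_count odd_comp_nz[OF assms])
  then have "real (card {c \<in> code_CQ e2 m2 Q. comp_vec c = k}) = (if k = k0 then 1 else 0) + real (q * (q ^ m2 - 1)) * (if k = k1 then 1 else 0)
      + (real ((q - 1) div 2) * (if Pp k then 1 else 0) + real ((q - 1) div 2) * (if Pm k then 1 else 0))"
    by (simp only: of_nat_add real_if0 real_if1)
  then show ?thesis by (simp only: k0_def k1_def Pp_def Pm_def half_real add.assoc)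
qed

lemma odd_weight_nz:
  assumes "odd r"
  shows "card {a. a \<noteq> 0 \<and> q ^ M - 1 - cv a 0 0 = w} = (if w = q ^ M - q ^ (M - 1) then q - 1 else 0)"
proof -
  have "1 \<le> q ^ (M - 1)" using q3 by simp
  moreover have "q ^ (M - 1) \<le> q ^ M" using q3 by (intro power_increasing) auto
  ultimately have hh: "q ^ M - 1 - (q ^ (M - 1) - 1) = q ^ M - q ^ (M - 1)" by linarith
  have ca: "a \<noteq> 0 \<longrightarrow> q ^ M - 1 - cv a 0 0 = q ^ M - q ^ (M - 1)" for a
    using cv_odd0[OF assms, of a] hh by simp
  show ?thesis
  proof (cases "w = q ^ M - q ^ (M - 1)")
    case True
    have "{a. a \<noteq> 0 \<and> q ^ M - 1 - cv a 0 0 = w} = {a. a \<noteq> 0}"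
    proof (rule Collect_cong)
      fix a show "(a \<noteq> 0 \<and> q ^ M - 1 - cv a 0 0 = w) = (a \<noteq> 0)" using ca[of a] True by auto
    qed
    then show ?thesis using card_nz by (subst if_P[OF True]) simp
  next
    case False
    have "{a. a \<noteq> 0 \<and> q ^ M - 1 - cv a 0 0 = w} = {}"
    proof -
      have "\<not> (a \<noteq> 0 \<and> q ^ M - 1 - cv a 0 0 = w)" for a using ca[of a] False by auto
      then show ?thesis by blast
    qed
    then show ?thesis by (subst if_not_P[OF False]) simp
  qed
qed

lemma odd_weights:
  assumes "odd r"
  shows "card {c \<in> code_CQ e2 m2 Q. hwt c = w} =
         (if w = 0 then 1 else if w = q ^ (M - 1) * (q - 1) then q ^ (m2 + 1) - 1 else 0)"
proof -
  have s: "q * (q ^ m2 - 1) + (q - 1) = q ^ (m2 + 1) - 1"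
  proof -
    have "q ^ m2 \<ge> 1" using q3 by simp
    then have "q * (q ^ m2 - 1) = q * q ^ m2 - q" by (simp add: diff_mult_distrib2)
    moreover have "q * q ^ m2 \<ge> q" using \<open>q ^ m2 \<ge> 1\<close> by simp
    ultimately show ?thesis using q3 by simp
  qed
  show ?thesis
    unfolding weight_count odd_weight_nz[OF assms] W1_eq
    using W1_pos s by auto
qed


lemma hdist_cw: "hdist (cw a b) (cw a' b') = hwt (cw (a - a') (b - b'))"
proof -
  have "cw (a - a') (b - b') z = cw a b z - cw a' b' z" for z
    using cw_diff[of a b a' b'] by (metis)
  then have "{z \<in> Fstar. cw a b z \<noteq> cw a' b' z} = {z \<in> Fstar. cw (a - a') (b - b') z \<noteq> 0}" by auto
  then show ?thesis by (simp add: hdist_def hwt_def)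
qed

lemma odd_hwt_nz:
  assumes "odd r" "\<not> (a = 0 \<and> b = 0)"
  shows "hwt (cw a b) = q ^ (M - 1) * (q - 1)"
proof (cases "b = 0")
  case False
  then show ?thesis using hwt_cw[of a b] hw_b[OF False, of a] W1_eq by simp
next
  case True
  then have a: "a \<noteq> 0" using assms by simp
  have "1 \<le> q ^ (M - 1)" using q3 by simp
  moreover have "q ^ (M - 1) \<le> q ^ M" using q3 by (intro power_increasing) auto
  ultimately have hh: "q ^ M - 1 - (q ^ (M - 1) - 1) = q ^ M - q ^ (M - 1)" by linarith
  show ?thesis using hwt_cw[of a 0] cv_odd0[OF assms(1) a] hh W1_eq True by simp
qed

lemma odd_min_dist:
  assumes "odd r"
  shows "min_dist (code_CQ e2 m2 Q) = q ^ (M - 1) * (q - 1)"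
proof -
  have "{hdist c c' |c c'. c \<in> code_CQ e2 m2 Q \<and> c' \<in> code_CQ e2 m2 Q \<and> c \<noteq> c'} = {q ^ (M - 1) * (q - 1)}"
  proof (rule set_eqI, rule iffI)
    fix x assume "x \<in> {hdist c c' |c c'. c \<in> code_CQ e2 m2 Q \<and> c' \<in> code_CQ e2 m2 Q \<and> c \<noteq> c'}"
    then obtain a b a' b' where x: "x = hdist (cw a b) (cw a' b')" and ne: "cw a b \<noteq> cw a' b'"
      by (auto simp: code_CQ_def)
    have "\<not> (a - a' = 0 \<and> b - b' = 0)" using ne by auto
    then show "x \<in> {q ^ (M - 1) * (q - 1)}" using x hdist_cw odd_hwt_nz[OF assms] by simp
  next
    fix x assume "x \<in> {q ^ (M - 1) * (q - 1)}"
    then have x: "x = hdist (cw 1 0) (cw 0 0)" using hdist_cw[of 1 0 0 0] odd_hwt_nz[OF assms, of 1 0] by simp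
    have "cw 1 0 \<noteq> cw 0 0" using cw_inj by simp
    moreover have "cw 1 0 \<in> code_CQ e2 m2 Q" "cw 0 0 \<in> code_CQ e2 m2 Q" by (auto simp: code_CQ_def)
    ultimately show "x \<in> {hdist c c' |c c'. c \<in> code_CQ e2 m2 Q \<and> c' \<in> code_CQ e2 m2 Q \<and> c \<noteq> c'}"
      using x by blast
  qed
  then show ?thesis by (simp add: min_dist_def)
qed

lemma geo: "(int q - 1) * (\<Sum>i<n. int q ^ (n - Suc i)) = int q ^ n - 1"
  using one_diff_power_eq'[of "int q" n] by (simp add: algebra_simps)

lemma griesmer_sum:
  "(\<Sum>i<m2 + 1. \<lceil>real (q ^ (M - 1) * (q - 1)) / real q ^ i\<rceil>) = int q ^ (m1 - 1) * (int q ^ (m2 + 1) - 1)"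
proof -
  have "(\<Sum>i<m2 + 1. \<lceil>real (q ^ (M - 1) * (q - 1)) / real q ^ i\<rceil>) = (\<Sum>i<m2 + 1. int q ^ (m1 - 1) * ((int q - 1) * int q ^ (m2 + 1 - Suc i)))"
  proof (intro sum.cong refl)
    fix i assume "i \<in> {..<m2 + 1}"
    then have i: "i \<le> m2" by simp
    have e: "M - 1 = (m1 - 1) + (m2 + 1 - Suc i) + i" using i m1 Mdef by simp
    have "real (q ^ (M - 1) * (q - 1)) / real q ^ i = real (q ^ (m1 - 1) * ((q - 1) * q ^ (m2 + 1 - Suc i)))"
    proof -
      have h: "real (q ^ (M - 1) * (q - 1)) = real (q ^ (m1 - 1) * ((q - 1) * q ^ (m2 + 1 - Suc i))) * real q ^ i"
        by (simp only: e power_add of_nat_mult of_nat_power) (simp add: algebra_simps)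
      have "real q ^ i \<noteq> 0" using qpos by simp
      then show ?thesis by (subst h) (rule nonzero_mult_div_cancel_right)
    qed
    then have "\<lceil>real (q ^ (M - 1) * (q - 1)) / real q ^ i\<rceil> = int (q ^ (m1 - 1) * ((q - 1) * q ^ (m2 + 1 - Suc i)))"
      by (simp only: ceiling_of_nat)
    also have "\<dots> = int q ^ (m1 - 1) * ((int q - 1) * int q ^ (m2 + 1 - Suc i))"
      using q3 by (simp add: of_nat_diff)
    finally show "\<lceil>real (q ^ (M - 1) * (q - 1)) / real q ^ i\<rceil> = int q ^ (m1 - 1) * ((int q - 1) * int q ^ (m2 + 1 - Suc i))" .
  qed
  also have "\<dots> = int q ^ (m1 - 1) * ((int q - 1) * (\<Sum>i<m2 + 1. int q ^ (m2 + 1 - Suc i)))"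
    by (simp only: sum_distrib_left)
  also have "\<dots> = int q ^ (m1 - 1) * (int q ^ (m2 + 1) - 1)" by (simp only: geo)
  finally show ?thesis .
qed

lemma odd_griesmer:
  assumes "odd r"
  shows "meets_griesmer q (card (Fstar :: ('b \<times> 'c) set)) (m2 + 1) (min_dist (code_CQ e2 m2 Q)) \<longleftrightarrow> m1 = 1 \<and> r = 1"
proof -
  have "meets_griesmer q (card (Fstar :: ('b \<times> 'c) set)) (m2 + 1) (min_dist (code_CQ e2 m2 Q))
      \<longleftrightarrow> int (q ^ M - 1) = int q ^ (m1 - 1) * (int q ^ (m2 + 1) - 1)"
    by (simp only: meets_griesmer_def card_Fstar odd_min_dist[OF assms] griesmer_sum)
  also have "int (q ^ M - 1) = int q ^ M - 1" using q3 by (simp add: of_nat_diff)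
  also have "int q ^ M = int q ^ (m1 - 1) * int q ^ (m2 + 1)"
  proof -
    have "M = (m1 - 1) + (m2 + 1)" using m1 Mdef by simp
    then show ?thesis by (simp only: power_add)
  qed
  also have "(int q ^ (m1 - 1) * int q ^ (m2 + 1) - 1 = int q ^ (m1 - 1) * (int q ^ (m2 + 1) - 1)) \<longleftrightarrow> int q ^ (m1 - 1) = 1"
    by (simp add: algebra_simps)
  also have "\<dots> \<longleftrightarrow> m1 - 1 = 0"
  proof (cases "m1 - 1 = 0")
    case True then show ?thesis by simp
  next
    case False
    have "q ^ (m1 - 1) \<ge> q ^ 1" using q3 False by (intro power_increasing) auto
    then have "q ^ (m1 - 1) \<ge> 3" using q3 by simp
    then have "int q ^ (m1 - 1) \<ge> 3" by (metis of_nat_le_iff of_nat_numeral of_nat_power)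
    then have "int q ^ (m1 - 1) \<noteq> 1" by simp
    then show ?thesis using False by simp
  qed
  also have "\<dots> \<longleftrightarrow> m1 = 1 \<and> r = 1" using m1 r_le r_ge by auto
  finally show ?thesis .
qed

end


theorem theorem1:
  fixes p m m1 m2 M q r :: nat
    and e1 :: "'a::{finite,field} \<Rightarrow> 'b::{finite,field}"
    and e2 :: "'a \<Rightarrow> 'c::{finite,field}"
    and Q :: "'b \<Rightarrow> 'a"
    and C :: "('b \<times> 'c \<Rightarrow> 'a) set"
    and \<epsilon> :: int
  assumes "prime p" and "odd p" and "m \<ge> 1"
    and "q = card (UNIV :: 'a set)" and "q = p ^ m"
    and "m1 \<ge> 1" and "m2 \<ge> 1" and "M = m1 + m2"
    and "is_emb e1" and "card (UNIV :: 'b set) = q ^ m1"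
    and "is_emb e2" and "card (UNIV :: 'c set) = q ^ m2"
    and "is_qform e1 Q" and "Q \<noteq> (\<lambda>_. 0)"
    and "r = qf_rank m1 Q" and "r \<ge> 1"
    and "\<epsilon> = qf_eps p m e1 m1 Q"
    and "C = code_CQ e2 m2 Q"
  shows
   "(even r \<longrightarrow>
      card (Fstar :: ('b \<times> 'c) set) = q ^ M - 1 \<and> is_linear_code C \<and> card C = q ^ (m2 + 1) \<and>
      (\<forall>w::nat. card {c \<in> C. hwt c = w} =
         (if w = 0 then 1
          else if w = q ^ (M - 1) * (q - 1) then q * (q ^ m2 - 1)
          else if real w = real q ^ (M - 1) * (real q - 1) * (1 - real_of_int \<epsilon> * real q powr (- (real r / 2)))
            then q - 1
          else 0)) \<and>
      (\<forall>k::'a \<Rightarrow> nat. real (card {c \<in> C. comp_vec c = k}) =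
           (if k = (\<lambda>w. if w = 0 then q ^ M - 1 else 0) then 1 else 0)
         + real (q * (q ^ m2 - 1)) * (if k = (\<lambda>w. if w = 0 then q ^ (M - 1) - 1 else q ^ (M - 1)) then 1 else 0)
         + real (q - 1) *
             (if real (k 0) = real q ^ (M - 1) * (1 + real_of_int \<epsilon> * real q powr (- (real r / 2)) * (real q - 1)) - 1
                 \<and> (\<forall>w. w \<noteq> 0 \<longrightarrow> real (k w) = real q ^ (M - 1) * (1 - real_of_int \<epsilon> * real q powr (- (real r / 2))))
              then 1 else 0)))
    \<and>
    (odd r \<longrightarrow>
      card (Fstar :: ('b \<times> 'c) set) = q ^ M - 1 \<and> is_linear_code C \<and> card C = q ^ (m2 + 1) \<and>
      (\<forall>w::nat. card {c \<in> C. hwt c = w} =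
         (if w = 0 then 1
          else if w = q ^ (M - 1) * (q - 1) then q ^ (m2 + 1) - 1
          else 0)) \<and>
      (\<forall>k::'a \<Rightarrow> nat. real (card {c \<in> C. comp_vec c = k}) =
           (if k = (\<lambda>w. if w = 0 then q ^ M - 1 else 0) then 1 else 0)
         + real (q * (q ^ m2 - 1)) * (if k = (\<lambda>w. if w = 0 then q ^ (M - 1) - 1 else q ^ (M - 1)) then 1 else 0)
         + (real q - 1) / 2 *
             (if k 0 = q ^ (M - 1) - 1
                 \<and> (\<forall>w. w \<noteq> 0 \<longrightarrow> real (k w) = real q ^ (M - 1) *
                        (1 + real_of_int \<epsilon> * real q powr ((1 - real r) / 2) * real_of_int (eta (- w))))
              then 1 else 0)
         + (real q - 1) / 2 *
             (if k 0 = q ^ (M - 1) - 1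
                 \<and> (\<forall>w. w \<noteq> 0 \<longrightarrow> real (k w) = real q ^ (M - 1) *
                        (1 - real_of_int \<epsilon> * real q powr ((1 - real r) / 2) * real_of_int (eta (- w))))
              then 1 else 0)) \<and>
      (meets_griesmer q (card (Fstar :: ('b \<times> 'c) set)) (m2 + 1) (min_dist C) \<longleftrightarrow> m1 = 1 \<and> r = 1))"
proof -
  interpret L: codeloc p m m1 m2 M q e1 e2 Q
    using assms by unfold_locales auto
  have rr: "r = L.r" using assms(15) by (simp add: L.r_def)
  have ee: "\<epsilon> = L.eps" using assms(17) by (simp add: L.eps_def)
  have CC: "C = code_CQ e2 m2 Q" using assms(18) .
  show ?thesis
    unfolding rr ee CC
    using L.card_Fstar L.linear_code L.card_code L.even_weights L.even_comp
      L.odd_weights L.odd_comp L.odd_griesmer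
    by blast
qed

end
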